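(* For any hypothesis class $\mathcal{H}\subseteq\{0,1\}^{\mathcal{X}}$ and time horizon $T$, $$\sqrt{\frac{\operatorname{L}(\mathcal{H})\,T}{8}} \;\le\; \inf_{\mathcal{A}}\operatorname{R}_{\mathcal{A}}(T,\mathcal{H}) \;\le\; 3\sqrt{\operatorname{L}(\mathcal{H})\,T\ln T},$$ where the infimum is over all (possibly randomized) online learners operating under apple tasting feedback.
   Context: Online binary classification: over rounds $t=1,\dots,T$, an adversary picks $(x_t,y_t)\in\mathcal{X}\times\{0,1\}$ and reveals $x_t$; the learner $\mathcal{A}$ (possibly randomized) outputs $\hat y_t=\mathcal{A}(x_t)\in\{0,1\}$ based on the history; under apple tasting feedback the learner observes $y_t$ only if $\hat y_t=1$. The expected regret is $\operatorname{R}_{\mathcal{A}}(T,\mathcal{H}) := \sup_{(x_1,y_1),\dots,(x_T,y_T)}\Bigl(\mathbb{E}\bigl[\sum_{t=1}^T\mathbb{1}\{\mathcal{A}(x_t)\ne y_t\}\bigr] - \inf_{h\in\mathcal{H}}\sum_{t=1}^T\mathbb{1}\{h(x_t)\neq y_t\}\Bigr)$, expectation over the learner's randomness. The Littlestone dimension $\operatorname{L}(\mathcal{H})$ is the largest $d$ such that there is a complete binary tree of depth $d$ whose internal nodes are labeled by instances of $\mathcal{X}$ and which is shattered by $\mathcal{H}$: for every root-to-leaf path $\sigma\in\{0,1\}^d$ (with $x_i$ the instance at the node reached by prefix $\sigma_1\dots\sigma_{i-1}$) some $h\in\mathcal{H}$ satisfies $h(x_i)=\sigma_i$ for all $i$;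 $\operatorname{L}(\mathcal{H})=\infty$ if arbitrarily deep such trees exist. *)

theory Defs
  imports Complex_Main "HOL-Library.Extended_Nat"
begin

text \<open>Littlestone dimension. A complete binary tree of depth d with internal
nodes labelled by instances is a map from (prefixes of) root-to-node paths,
i.e. bool lists, to instances.\<close>

definition shatters_depth :: "('x \<Rightarrow> bool) set \<Rightarrow> nat \<Rightarrow> bool" where
  "shatters_depth H d \<longleftrightarrow>
     (\<exists>tree :: bool list \<Rightarrow> 'x. \<forall>\<sigma>. length \<sigma> = d \<longrightarrow>
        (\<exists>h\<in>H. \<forall>i<d. h (tree (take i \<sigma>)) = \<sigma> ! i))"

definition ldim :: "('x \<Rightarrow> bool) set \<Rightarrow> enat" where
  "ldim H = Sup {enat d | d. shatters_depth H d}"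

text \<open>History available to an apple-tasting learner: per past round, the
instance, its own prediction, and the label (observed only if prediction = 1).\<close>
type_synonym 'x history = "('x \<times> bool \<times> bool option) list"

text \<open>A randomized learner (behavioural strategy): given the history and the
current instance, the probability of predicting 1.\<close>
type_synonym 'x learner = "'x history \<Rightarrow> 'x \<Rightarrow> real"

definition valid_learner :: "'x learner \<Rightarrow> bool" where
  "valid_learner A \<longleftrightarrow> (\<forall>h x. 0 \<le> A h x \<and> A h x \<le> 1)"

fun exp_mistakes :: "'x learner \<Rightarrow> 'x history \<Rightarrow> ('x \<times> bool) list \<Rightarrow> real" where
  "exp_mistakes A hist [] = 0"
| "exp_mistakes A hist ((x, y) # rest) =
     A hist x * ((if y then 0 else 1) + exp_mistakes A (hist @ [(x, True, Some y)]) rest)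
   + (1 - A hist x) * ((if y then 1 else 0) + exp_mistakes A (hist @ [(x, False, None)]) rest)"

definition mistakes :: "('x \<Rightarrow> bool) \<Rightarrow> ('x \<times> bool) list \<Rightarrow> nat" where
  "mistakes h s = length (filter (\<lambda>(x, y). h x \<noteq> y) s)"

definition regret :: "'x learner \<Rightarrow> nat \<Rightarrow> ('x \<Rightarrow> bool) set \<Rightarrow> real" where
  "regret A T H = (SUP s \<in> {s :: ('x \<times> bool) list. length s = T}.
      exp_mistakes A [] s - real (INF h \<in> H. mistakes h s))"

definition minimax_regret :: "nat \<Rightarrow> ('x \<Rightarrow> bool) set \<Rightarrow> real" where
  "minimax_regret T H = (INF A \<in> {A :: 'x learner. valid_learner A}. regret A T H)"

end

theory Submission
  imports Defs
begin


lemma shatters_mono_class: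
  assumes "shatters_depth V k" "V \<subseteq> W" shows "shatters_depth W k"
proof -
  obtain tr where tr: "\<forall>\<sigma>. length \<sigma> = k \<longrightarrow> (\<exists>h\<in>V. \<forall>i<k. h (tr (take i \<sigma>)) = \<sigma> ! i)"
    using assms(1) unfolding shatters_depth_def by blast
  have "\<forall>\<sigma>. length \<sigma> = k \<longrightarrow> (\<exists>h\<in>W. \<forall>i<k. h (tr (take i \<sigma>)) = \<sigma> ! i)"
    using tr assms(2) by blast
  then show ?thesis unfolding shatters_depth_def by blast
qed

lemma shatters_mono_depth:
  assumes "shatters_depth V k" "k' \<le> k" shows "shatters_depth V k'"
proof -
  obtain tr where tr: "\<forall>\<sigma>. length \<sigma> = k \<longrightarrow> (\<exists>h\<in>V. \<forall>i<k. h (tr (take i \<sigma>)) = \<sigma> ! i)"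
    using assms(1) unfolding shatters_depth_def by blast
  show ?thesis unfolding shatters_depth_def
  proof (intro exI allI impI)
    fix \<sigma> :: "bool list" assume len: "length \<sigma> = k'"
    let ?s = "\<sigma> @ replicate (k - k') False"
    have "length ?s = k" using len assms(2) by simp
    then obtain h where h: "h \<in> V" "\<forall>i<k. h (tr (take i ?s)) = ?s ! i" using tr by blast
    have "\<forall>i<k'. h (tr (take i \<sigma>)) = \<sigma> ! i"
    proof (intro allI impI)
      fix i assume "i < k'"
      then have "take i ?s = take i \<sigma>" "?s ! i = \<sigma> ! i" using len by (auto simp: nth_append)
      moreover have "i < k" using \<open>i<k'\<close> assms(2) by simp
      ultimately show "h (tr (take i \<sigma>)) = \<sigma> ! i" using h(2) by metis
    qed
    then show "\<exists>h\<in>V. \<forall>i<k'. h (tr (take i \<sigma>)) = \<sigma> ! i" using h(1) by blast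
  qed
qed

lemma shatters_zero: "shatters_depth V 0 \<longleftrightarrow> V \<noteq> {}"
  unfolding shatters_depth_def by auto

lemma shatters_combine:
  assumes "shatters_depth {h\<in>V. h x = True} k" "shatters_depth {h\<in>V. h x = False} k"
  shows "shatters_depth V (Suc k)"
proof -
  obtain t1 where t1: "\<forall>\<sigma>. length \<sigma> = k \<longrightarrow> (\<exists>h\<in>{h\<in>V. h x = True}. \<forall>i<k. h (t1 (take i \<sigma>)) = \<sigma> ! i)"
    using assms(1) unfolding shatters_depth_def by blast
  obtain t0 where t0: "\<forall>\<sigma>. length \<sigma> = k \<longrightarrow> (\<exists>h\<in>{h\<in>V. h x = False}. \<forall>i<k. h (t0 (take i \<sigma>)) = \<sigma> ! i)"
    using assms(2) unfolding shatters_depth_def by blast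
  define tr where "tr = (\<lambda>\<sigma>::bool list. case \<sigma> of [] \<Rightarrow> x | b # \<sigma>' \<Rightarrow> if b then t1 \<sigma>' else t0 \<sigma>')"
  show ?thesis unfolding shatters_depth_def
  proof (intro exI[of _ tr] allI impI)
    fix \<sigma> :: "bool list" assume "length \<sigma> = Suc k"
    then obtain b \<sigma>' where s: "\<sigma> = b # \<sigma>'" "length \<sigma>' = k" by (cases \<sigma>) auto
    have "\<exists>h. h \<in> V \<and> h x = b \<and> (\<forall>i<k. h ((if b then t1 else t0) (take i \<sigma>')) = \<sigma>' ! i)"
    proof (cases b)
      case True
      then obtain h where "h \<in> {h\<in>V. h x = True}" "\<forall>i<k. h (t1 (take i \<sigma>')) = \<sigma>' ! i"
        using t1 s(2) by blast
      then show ?thesis using True by auto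
    next
      case False
      then obtain h where "h \<in> {h\<in>V. h x = False}" "\<forall>i<k. h (t0 (take i \<sigma>')) = \<sigma>' ! i"
        using t0 s(2) by blast
      then show ?thesis using False by auto
    qed
    then obtain h where h: "h \<in> V" "h x = b" "\<forall>i<k. h ((if b then t1 else t0) (take i \<sigma>')) = \<sigma>' ! i"
      by blast
    have "\<forall>i<Suc k. h (tr (take i \<sigma>)) = \<sigma> ! i"
    proof (intro allI impI)
      fix i assume "i < Suc k"
      show "h (tr (take i \<sigma>)) = \<sigma> ! i"
      proof (cases i)
        case 0 then show ?thesis using h s by (simp add: tr_def)
      next
        case (Suc j)
        then have "j < k" using \<open>i < Suc k\<close> by simp
        have "tr (take i \<sigma>) = (if b then t1 else t0) (take j \<sigma>')" using Suc s by (simp add: tr_def)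
        moreover have "\<sigma> ! i = \<sigma>' ! j" using Suc s by simp
        ultimately show ?thesis using h(3) \<open>j < k\<close> by simp
      qed
    qed
    then show "\<exists>h\<in>V. \<forall>i<Suc k. h (tr (take i \<sigma>)) = \<sigma> ! i" using h(1) by blast
  qed
qed

locale lclass =
  fixes H :: "('x \<Rightarrow> bool) set" and d :: nat
  assumes bound: "\<And>k. shatters_depth H k \<Longrightarrow> k \<le> d"
begin

definition rk :: "('x \<Rightarrow> bool) set \<Rightarrow> nat" where
  "rk V = card {k \<in> {..d}. shatters_depth V k}"

lemma rk_char:
  assumes "V \<subseteq> H" shows "shatters_depth V k \<longleftrightarrow> k < rk V"
proof -
  let ?S = "{k \<in> {..d}. shatters_depth V k}"
  have bd: "shatters_depth V k \<Longrightarrow> k \<le> d" for k using bound shatters_mono_class assms by blast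
  show ?thesis
  proof (cases "?S = {}")
    case True
    then have "\<not> shatters_depth V k" using bd by auto
    moreover have "rk V = 0" unfolding rk_def using True by (simp only: card.empty)
    ultimately show ?thesis by simp
  next
    case False
    define m where "m = Max ?S"
    have fin: "finite ?S" by simp
    have mS: "m \<in> ?S" using False fin m_def Max_in by blast
    have "?S = {..m}"
    proof
      show "?S \<subseteq> {..m}" using fin m_def by auto
      show "{..m} \<subseteq> ?S" using mS shatters_mono_depth by auto
    qed
    then have "rk V = Suc m" by (simp add: rk_def)
    moreover have "shatters_depth V k \<longleftrightarrow> k \<le> m" using \<open>?S = {..m}\<close> bd by blast
    ultimately show ?thesis by (simp add: less_Suc_eq_le)
  qed
qed

lemma rk_mono: "V' \<subseteq> V \<Longrightarrow> rk V' \<le> rk V"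
  unfolding rk_def by (rule card_mono) (auto intro: shatters_mono_class)

lemma rk_le: "rk V \<le> Suc d"
proof -
  have "rk V \<le> card {..d}" unfolding rk_def by (rule card_mono) auto
  then show ?thesis by simp
qed

definition soa :: "('x \<Rightarrow> bool) set \<Rightarrow> 'x \<Rightarrow> bool" where
  "soa V x = (rk {h\<in>V. h x = False} \<le> rk {h\<in>V. h x = True})"

lemma soa_mistake:
  assumes "V \<subseteq> H" "g \<in> V" "g x \<noteq> soa V x"
  shows "rk {h\<in>V. h x = g x} < rk V"
proof -
  let ?Vc = "{h\<in>V. h x = g x}" and ?Vb = "{h\<in>V. h x = (\<not> g x)}"
  have sub: "?Vc \<subseteq> H" "?Vb \<subseteq> H" using assms(1) by auto
  have "?Vc \<noteq> {}" using assms(2) by auto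
  then have "0 < rk ?Vc" using rk_char[OF sub(1)] shatters_zero by blast
  define m where "m = rk ?Vc - 1"
  have m: "rk ?Vc = Suc m" using \<open>0 < rk ?Vc\<close> m_def by simp
  have "rk ?Vc \<le> rk ?Vb"
    using assms(3) unfolding soa_def by (cases "g x") auto
  have "shatters_depth ?Vc m" using rk_char[OF sub(1)] m by simp
  moreover have "shatters_depth ?Vb m" using rk_char[OF sub(2)] m \<open>rk ?Vc \<le> rk ?Vb\<close> by simp
  ultimately have "shatters_depth V (Suc m)"
    by (cases "g x") (auto intro: shatters_combine)
  then have "Suc m < rk V" using rk_char assms(1) by blast
  then show ?thesis using m by simp
qed

definition epred :: "nat set \<Rightarrow> ('x \<Rightarrow> bool) set \<Rightarrow> nat \<Rightarrow> 'x \<Rightarrow> bool" where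
  "epred M V t x = (if t \<in> M then \<not> soa V x else soa V x)"

fun evs :: "nat set \<Rightarrow> ('x \<Rightarrow> bool) set \<Rightarrow> nat \<Rightarrow> 'x list \<Rightarrow> ('x \<Rightarrow> bool) set" where
  "evs M V t [] = V"
| "evs M V t (x # xs) = evs M {h\<in>V. h x = epred M V t x} (Suc t) xs"

definition pred :: "nat set \<Rightarrow> 'x list \<Rightarrow> 'x \<Rightarrow> bool" where
  "pred M xs x = epred M (evs M H 0 xs) (length xs) x"

lemma evs_snoc:
  "evs M V i (as @ [x]) = {g \<in> evs M V i as. g x = epred M (evs M V i as) (i + length as) x}"
  by (induction as arbitrary: V i) auto

lemma cover:
  assumes "h \<in> H"
  shows "\<exists>M. M \<subseteq> {..<length xs} \<and> card M \<le> d \<and> (\<forall>t<length xs. pred M (take t xs) (xs!t) = h (xs!t))"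
proof -
  define Vt where "Vt t = {g\<in>H. \<forall>j<t. g (xs!j) = h (xs!j)}" for t
  define M where "M = {t. t < length xs \<and> soa (Vt t) (xs!t) \<noteq> h (xs!t)}"
  have VtS: "Vt (Suc t) = {g \<in> Vt t. g (xs!t) = h (xs!t)}" for t
    unfolding Vt_def using less_Suc_eq by auto
  have ev: "t \<le> length xs \<Longrightarrow> evs M H 0 (take t xs) = Vt t" for t
  proof (induction t)
    case 0 then show ?case by (simp add: Vt_def)
  next
    case (Suc t)
    then have tl: "t < length xs" by simp
    have "epred M (Vt t) t (xs!t) = h (xs!t)" unfolding epred_def M_def using tl by auto
    then show ?case using Suc tl by (simp add: take_Suc_conv_app_nth evs_snoc VtS)
  qed
  have hV: "h \<in> Vt t" for t using assms by (simp add: Vt_def)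
  have VH: "Vt t \<subseteq> H" for t by (auto simp: Vt_def)
  have cnt: "t \<le> length xs \<Longrightarrow> rk (Vt t) + card (M \<inter> {..<t}) \<le> rk H" for t
  proof (induction t)
    case 0 then show ?case by (simp add: Vt_def)
  next
    case (Suc t)
    then have IH: "rk (Vt t) + card (M \<inter> {..<t}) \<le> rk H" by simp
    show ?case
    proof (cases "t \<in> M")
      case True
      then have "soa (Vt t) (xs!t) \<noteq> h (xs!t)" by (simp add: M_def)
      then have "rk (Vt (Suc t)) < rk (Vt t)" using soa_mistake[OF VH hV] VtS by metis
      moreover have "M \<inter> {..<Suc t} = insert t (M \<inter> {..<t})" using True lessThan_Suc by auto
      ultimately show ?thesis using IH by simp
    next
      case False
      then have "M \<inter> {..<Suc t} = M \<inter> {..<t}" using lessThan_Suc by auto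
      moreover have "rk (Vt (Suc t)) \<le> rk (Vt t)" using rk_mono VtS by auto
      ultimately show ?thesis using IH by simp
    qed
  qed
  have "0 < rk (Vt (length xs))" using rk_char[OF VH] shatters_zero hV by blast
  moreover have "M \<inter> {..<length xs} = M" by (auto simp: M_def)
  ultimately have "card M \<le> d" using cnt[of "length xs"] rk_le[of H] by simp
  moreover have "M \<subseteq> {..<length xs}" by (auto simp: M_def)
  moreover have "\<forall>t<length xs. pred M (take t xs) (xs!t) = h (xs!t)"
  proof (intro allI impI)
    fix t assume tl: "t < length xs"
    have "pred M (take t xs) (xs!t) = epred M (Vt t) t (xs!t)"
      using ev[of t] tl by (simp add: pred_def)
    then show "pred M (take t xs) (xs!t) = h (xs!t)" using tl by (auto simp: epred_def M_def)
  qed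
  ultimately show ?thesis by blast
qed

end


lemma exp_upper_neg:
  fixes u :: real assumes "u \<le> 0" shows "exp u \<le> 1 + u + u^2/2"
proof -
  have a: "1 + (-u) + (-u)^2/2 \<le> exp (-u)" using exp_lower_Taylor_quadratic[of "-u"] assms by simp
  have "0 \<le> u^2/2" by simp
  then have pos: "0 < 1 - u + u^2/2" using assms by linarith
  have "exp u = 1 / exp (-u)" by (simp add: exp_minus divide_inverse)
  also have "\<dots> \<le> 1 / (1 - u + u^2/2)" using a pos by (intro divide_left_mono) auto
  also have "\<dots> \<le> 1 + u + u^2/2"
  proof -
    have "(1 + u + u^2/2) * (1 - u + u^2/2) = 1 + u^4/4"
      by (simp add: algebra_simps power2_eq_square power4_eq_xxxx)
    then have "1 \<le> (1 + u + u^2/2) * (1 - u + u^2/2)" by simp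
    then show ?thesis using pos by (simp add: divide_le_eq)
  qed
  finally show ?thesis .
qed

lemma logA:
  fixes q \<eta> :: real
  assumes q: "0 \<le> q" "q \<le> 1" and e: "0 < \<eta>" "\<eta> \<le> 1"
  shows "- q + ln (1 - q + q * exp \<eta>) / \<eta> \<le> 2 * \<eta>"
proof -
  have eb: "exp \<eta> \<le> 1 + \<eta> + \<eta>^2" using exp_bound e by simp
  have "1 \<le> exp \<eta>" using e by simp
  then have "q \<le> q * exp \<eta>" using q by (simp add: mult_left_mono[of 1 "exp \<eta>" q, simplified])
  then have pos: "0 < 1 - q + q * exp \<eta>" by linarith
  have "ln (1 - q + q * exp \<eta>) \<le> (1 - q + q * exp \<eta>) - 1" by (rule ln_le_minus_one[OF pos])
  also have "\<dots> \<le> q * (\<eta> + \<eta>^2)"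
  proof -
    have "q * exp \<eta> \<le> q * (1 + \<eta> + \<eta>^2)" using eb q by (simp add: mult_left_mono)
    then show ?thesis by (simp add: algebra_simps)
  qed
  finally have L: "ln (1 - q + q * exp \<eta>) \<le> q * (\<eta> + \<eta>^2)" .
  have "ln (1 - q + q * exp \<eta>) / \<eta> \<le> q * (\<eta> + \<eta>^2) / \<eta>" using L e by (simp add: divide_right_mono)
  also have "\<dots> = q + q * \<eta>" using e by (simp add: power2_eq_square field_simps)
  finally have "ln (1 - q + q * exp \<eta>) / \<eta> \<le> q + q * \<eta>" .
  moreover have "q * \<eta> \<le> \<eta>" using q e by (simp add: mult_left_le_one_le)
  ultimately show ?thesis using e by linarith
qed

lemma logB:
  fixes q \<eta> :: real
  assumes q: "0 \<le> q" "q \<le> 1" and e: "0 < \<eta>" "\<eta> \<le> 1"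
  shows "q + (q * ln (1 - q + q * exp (\<eta> - 2 * \<eta> / q)) + (1 - q) * ln (1 - q + q * exp \<eta>)) / \<eta> \<le> 2 * \<eta>"
proof (cases "q = 0")
  case True then show ?thesis using e by simp
next
  case False
  then have qp: "0 < q" using q by simp
  define u where "u = \<eta> - 2 * \<eta> / q"
  have "2 * \<eta> \<le> 2 * \<eta> / q" using qp q e by (simp add: le_divide_eq)
  then have u0: "u \<le> 0" using e by (simp add: u_def)
  have eb: "exp \<eta> \<le> 1 + \<eta> + \<eta>^2" using exp_bound e by simp
  have "1 \<le> exp \<eta>" using e by simp
  then have "q \<le> q * exp \<eta>" using q by (simp add: mult_left_mono[of 1 "exp \<eta>" q, simplified])
  then have pos0: "0 < 1 - q + q * exp \<eta>" by linarith
  have pos1: "0 < 1 - q + q * exp u" using q qp by (smt (verit) exp_gt_zero mult_pos_pos)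
  have "ln (1 - q + q * exp \<eta>) \<le> (1 - q + q * exp \<eta>) - 1" by (rule ln_le_minus_one[OF pos0])
  also have "\<dots> \<le> q * (\<eta> + \<eta>^2)"
  proof -
    have "q * exp \<eta> \<le> q * (1 + \<eta> + \<eta>^2)" using eb q by (simp add: mult_left_mono)
    then show ?thesis by (simp add: algebra_simps)
  qed
  finally have L0: "ln (1 - q + q * exp \<eta>) \<le> q * (\<eta> + \<eta>^2)" .
  have "ln (1 - q + q * exp u) \<le> (1 - q + q * exp u) - 1" by (rule ln_le_minus_one[OF pos1])
  also have "\<dots> \<le> q * (u + u^2/2)"
  proof -
    have "q * exp u \<le> q * (1 + u + u^2/2)" using exp_upper_neg[OF u0] q by (simp add: mult_left_mono)
    then show ?thesis by (simp add: algebra_simps)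
  qed
  finally have L1: "ln (1 - q + q * exp u) \<le> q * (u + u^2/2)" .
  have S: "q * ln (1 - q + q * exp u) + (1 - q) * ln (1 - q + q * exp \<eta>)
      \<le> q * (q * (u + u^2/2)) + (1 - q) * (q * (\<eta> + \<eta>^2))"
    using L0 L1 q by (intro add_mono mult_left_mono) auto
  have qu: "q * u = q * \<eta> - 2 * \<eta>" using qp by (simp add: u_def field_simps)
  have "q * (q * (u + u^2/2)) = q * (q * u) + (q * u)^2 / 2" by (simp add: algebra_simps power2_eq_square)
  also have "\<dots> = q * (q * \<eta> - 2 * \<eta>) + (q * \<eta> - 2 * \<eta>)^2 / 2" by (simp only: qu)
  finally have E: "q * (q * (u + u^2/2)) = q * (q * \<eta> - 2 * \<eta>) + (q * \<eta> - 2 * \<eta>)^2 / 2" .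
  have id: "q * \<eta> + (q * (q * \<eta> - 2 * \<eta>) + (q * \<eta> - 2 * \<eta>)^2 / 2) + (1 - q) * (q * (\<eta> + \<eta>^2))
      = \<eta>^2 * (2 - q - q^2/2)"
    by (simp add: algebra_simps power2_eq_square divide_simps)
  have "0 \<le> q^2" by simp
  then have "2 - q - q^2/2 \<le> 2" using q by linarith
  then have "\<eta>^2 * (2 - q - q^2/2) \<le> \<eta>^2 * 2" by (intro mult_left_mono) auto
  then have "q * \<eta> + (q * ln (1 - q + q * exp u) + (1 - q) * ln (1 - q + q * exp \<eta>)) \<le> 2 * \<eta> * \<eta>"
    using S E id by (simp add: power2_eq_square)
  then have "(q * \<eta> + (q * ln (1 - q + q * exp u) + (1 - q) * ln (1 - q + q * exp \<eta>))) / \<eta> \<le> 2 * \<eta>"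
    using e by (simp add: divide_le_eq)
  then show ?thesis using e by (simp add: u_def add_divide_distrib)
qed



lemma step_ineq:
  fixes q \<eta> :: real and y ee :: bool
  assumes q: "0 \<le> q" "q \<le> 1" and e: "0 < \<eta>" "\<eta> \<le> 1" and qe: "ee \<Longrightarrow> 0 < q"
  defines "c1 \<equiv> -1 + (if \<not> y then 2 / q else 0)"
  shows "q * (if y then 0 else 1) + (1 - q) * (if y then 1 else 0)
     + q * (ln (1 - q + q * exp (- \<eta> * c1)) / \<eta> + (if ee then c1 else 0))
     + (1 - q) * (ln (1 - q + q * exp (- \<eta> * (-1))) / \<eta> + (if ee then -1 else 0))
     \<le> (if ee \<noteq> y then 1 else 0) + 2 * \<eta>"
proof (cases y)
  case True
  have qa: "q * a + (1 - q) * a = a" for a :: real by (simp add: algebra_simps)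
  from True have c: "c1 = -1" by (simp add: c1_def)
  have A: "- q + ln (1 - q + q * exp \<eta>) / \<eta> \<le> 2 * \<eta>" by (rule logA[OF q e])
  have "q * (ln (1 - q + q * exp \<eta>) / \<eta>) + (1 - q) * (ln (1 - q + q * exp \<eta>) / \<eta>)
      = ln (1 - q + q * exp \<eta>) / \<eta>" using qa[of "ln (1 - q + q * exp \<eta>) / \<eta>"] by simp
  then show ?thesis using True c A by (cases ee) (auto simp: algebra_simps)
next
  case False
  then have c: "c1 = -1 + 2 / q" by (simp add: c1_def)
  have ex: "- \<eta> * c1 = \<eta> - 2 * \<eta> / q" by (simp add: c algebra_simps)
  have B: "q + (q * ln (1 - q + q * exp (\<eta> - 2 * \<eta> / q)) + (1 - q) * ln (1 - q + q * exp \<eta>)) / \<eta> \<le> 2 * \<eta>"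
    by (rule logB[OF q e])
  have ec: "ee \<Longrightarrow> q * c1 + (1 - q) * (-1) = 1"
  proof -
    assume ee
    then have "q \<noteq> 0" using qe by simp
    then show ?thesis by (simp add: c algebra_simps)
  qed
  have "q * (ln (1 - q + q * exp (\<eta> - 2 * \<eta> / q)) / \<eta>) + (1 - q) * (ln (1 - q + q * exp \<eta>) / \<eta>)
     = (q * ln (1 - q + q * exp (\<eta> - 2 * \<eta> / q)) + (1 - q) * ln (1 - q + q * exp \<eta>)) / \<eta>"
    by (simp add: add_divide_distrib)
  then show ?thesis using False ex B ec by (cases ee) (auto simp: algebra_simps)
qed

locale ew =
  fixes I :: "'i set" and Ep :: "'i \<Rightarrow> 'x list \<Rightarrow> 'x \<Rightarrow> bool" and \<eta> :: real
  assumes finI: "finite I" and neI: "I \<noteq> {}" and eta0: "0 < \<eta>" and eta1: "\<eta> \<le> 1"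
begin

definition qf :: "('i \<Rightarrow> real) \<Rightarrow> 'x list \<Rightarrow> 'x \<Rightarrow> real" where
  "qf w xs x = (\<Sum>j\<in>I. if Ep j xs x then w j else 0) / (\<Sum>j\<in>I. w j)"

definition cc :: "('i \<Rightarrow> real) \<Rightarrow> 'x list \<Rightarrow> 'x \<times> bool \<times> bool option \<Rightarrow> real" where
  "cc w xs r = -1 + (if fst (snd r) \<and> snd (snd r) = Some False then 2 / qf w xs (fst r) else 0)"

definition lh :: "('i \<Rightarrow> real) \<Rightarrow> 'x list \<Rightarrow> 'x \<times> bool \<times> bool option \<Rightarrow> 'i \<Rightarrow> real" where
  "lh w xs r i = (if Ep i xs (fst r) then cc w xs r else 0)"

definition stp :: "('i \<Rightarrow> real) \<times> 'x list \<Rightarrow> 'x \<times> bool \<times> bool option \<Rightarrow> ('i \<Rightarrow> real) \<times> 'x list" where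
  "stp st r = ((\<lambda>i. fst st i * exp (- \<eta> * lh (fst st) (snd st) r i)), snd st @ [fst r])"

definition sth :: "'x history \<Rightarrow> ('i \<Rightarrow> real) \<times> 'x list" where
  "sth hist = foldl stp ((\<lambda>_. 1), []) hist"

definition wt :: "'x history \<Rightarrow> 'i \<Rightarrow> real" where
  "wt hist = fst (sth hist)"

definition AL :: "'x learner" where
  "AL hist x = qf (wt hist) (map fst hist) x"

fun mis :: "'i \<Rightarrow> 'x list \<Rightarrow> ('x \<times> bool) list \<Rightarrow> real" where
  "mis i xs [] = 0"
| "mis i xs ((x, y) # r) = (if Ep i xs x \<noteq> y then 1 else 0) + mis i (xs @ [x]) r"

lemma sth_snoc: "sth (hist @ [r]) = stp (sth hist) r"
  by (simp add: sth_def)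

lemma snd_sth: "snd (sth hist) = map fst hist"
  by (induction hist rule: rev_induct) (simp_all add: sth_snoc stp_def, simp add: sth_def)

lemma wt_nil: "wt [] = (\<lambda>_. 1)"
  by (simp add: wt_def sth_def)

lemma wt_snoc: "wt (hist @ [r]) = (\<lambda>i. wt hist i * exp (- \<eta> * lh (wt hist) (map fst hist) r i))"
  by (simp add: wt_def sth_snoc stp_def snd_sth)

lemma wt_pos: "0 < wt hist i"
  by (induction hist rule: rev_induct) (simp_all add: wt_nil wt_snoc)

lemma W_pos: "0 < (\<Sum>j\<in>I. wt hist j)"
  using finI neI wt_pos by (simp add: sum_pos)

lemma qf_bounds:
  assumes "\<And>j. 0 < w j"
  shows "0 \<le> qf w xs x" "qf w xs x \<le> 1"
proof -
  have W: "0 < (\<Sum>j\<in>I. w j)" using finI neI assms by (simp add: sum_pos)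
  have n0: "0 \<le> (\<Sum>j\<in>I. if Ep j xs x then w j else 0)"
    using assms by (intro sum_nonneg) (simp add: less_imp_le)
  have n1: "(\<Sum>j\<in>I. if Ep j xs x then w j else 0) \<le> (\<Sum>j\<in>I. w j)"
    using assms by (intro sum_mono) (simp add: less_imp_le)
  show "0 \<le> qf w xs x" using n0 W by (simp add: qf_def)
  show "qf w xs x \<le> 1" using n1 W by (simp add: qf_def)
qed

lemma qf_pos:
  assumes "\<And>j. 0 < w j" "i \<in> I" "Ep i xs x"
  shows "0 < qf w xs x"
proof -
  have W: "0 < (\<Sum>j\<in>I. w j)" using finI neI assms by (simp add: sum_pos)
  have "w i \<le> (\<Sum>j\<in>I. if Ep j xs x then w j else 0)"
    using member_le_sum[of i I "\<lambda>j. if Ep j xs x then w j else 0"] assms finI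
    by (simp add: less_imp_le)
  then have "0 < (\<Sum>j\<in>I. if Ep j xs x then w j else 0)" using assms(1)[of i] by linarith
  then show ?thesis using W by (simp add: qf_def)
qed

lemma valid: "valid_learner AL"
  unfolding valid_learner_def AL_def
proof (intro allI)
  fix h x
  show "0 \<le> qf (wt h) (map fst h) x \<and> qf (wt h) (map fst h) x \<le> 1"
    using qf_bounds[of "wt h" "map fst h" x] wt_pos by simp
qed

lemma sum_step:
  assumes "\<And>j. 0 < w j"
  shows "(\<Sum>j\<in>I. w j * exp (- \<eta> * (if Ep j xs x then c else 0)))
       = (\<Sum>j\<in>I. w j) * (1 - qf w xs x + qf w xs x * exp (- \<eta> * c))"
proof -
  define W where "W = (\<Sum>j\<in>I. w j)"
  define N where "N = (\<Sum>j\<in>I. if Ep j xs x then w j else 0)"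
  have W: "0 < W" using finI neI assms by (simp add: sum_pos W_def)
  have "(\<Sum>j\<in>I. w j * exp (- \<eta> * (if Ep j xs x then c else 0)))
      = (\<Sum>j\<in>I. w j + (exp (- \<eta> * c) - 1) * (if Ep j xs x then w j else 0))"
    by (intro sum.cong) (auto simp: algebra_simps)
  also have "\<dots> = W + (exp (- \<eta> * c) - 1) * N"
    by (simp add: sum.distrib sum_distrib_left W_def N_def)
  also have "\<dots> = W * (1 - N / W + N / W * exp (- \<eta> * c))"
    using W by (simp add: field_simps)
  finally show ?thesis by (simp add: W_def N_def qf_def)
qed

lemma main:
  assumes "i \<in> I"
  shows "exp_mistakes AL hist s \<le> mis i (map fst hist) s
     + (ln (\<Sum>j\<in>I. wt hist j) - ln (wt hist i)) / \<eta> + 2 * \<eta> * length s"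
proof (induction s arbitrary: hist)
  case Nil
  have "wt hist i \<le> (\<Sum>j\<in>I. wt hist j)"
    using member_le_sum[of i I "wt hist"] assms finI wt_pos by (simp add: less_imp_le)
  then have "ln (wt hist i) \<le> ln (\<Sum>j\<in>I. wt hist j)" using wt_pos[of hist i] W_pos[of hist] by simp
  then show ?case using eta0 by simp
next
  case (Cons p rest)
  obtain x y where p: "p = (x, y)" by (cases p)
  define w where "w = wt hist"
  define xs where "xs = map fst hist"
  define q where "q = qf w xs x"
  define W where "W = (\<Sum>j\<in>I. w j)"
  define c1 where "c1 = -1 + (if \<not> y then 2 / q else 0)"
  define h1 where "h1 = hist @ [(x, True, Some y)]"
  define h0 where "h0 = hist @ [(x, False, None)]"
  define R where "R = mis i (xs @ [x]) rest"
  define D where "D = (ln W - ln (w i)) / \<eta>"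
  define n where "n = length rest"
  have wp: "\<And>j. 0 < w j" by (simp add: w_def wt_pos)
  have Wp: "0 < W" using W_pos by (simp add: W_def w_def)
  have q01: "0 \<le> q" "q \<le> 1" using qf_bounds[OF wp] by (simp_all add: q_def)
  have qe: "Ep i xs x \<Longrightarrow> 0 < q" using qf_pos[OF wp assms] by (simp add: q_def)
  have lh1: "lh w xs (x, True, Some y) j = (if Ep j xs x then c1 else 0)" for j
    by (simp add: lh_def cc_def c1_def q_def)
  have lh0: "lh w xs (x, False, None) j = (if Ep j xs x then -1 else 0)" for j
    by (simp add: lh_def cc_def)
  have wt1: "wt h1 = (\<lambda>j. w j * exp (- \<eta> * (if Ep j xs x then c1 else 0)))"
    unfolding h1_def wt_snoc using lh1 by (simp add: w_def xs_def)
  have wt0: "wt h0 = (\<lambda>j. w j * exp (- \<eta> * (if Ep j xs x then -1 else 0)))"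
    unfolding h0_def wt_snoc using lh0 by (simp add: w_def xs_def)
  define F1 where "F1 = 1 - q + q * exp (- \<eta> * c1)"
  define F0 where "F0 = 1 - q + q * exp (- \<eta> * (-1))"
  have W1: "(\<Sum>j\<in>I. wt h1 j) = W * F1" unfolding wt1 W_def F1_def q_def by (rule sum_step[OF wp])
  have W0: "(\<Sum>j\<in>I. wt h0 j) = W * F0" unfolding wt0 W_def F0_def q_def by (rule sum_step[OF wp])
  have F1p: "0 < F1" using W1 W_pos[of h1] Wp by (simp add: zero_less_mult_iff)
  have F0p: "0 < F0" using W0 W_pos[of h0] Wp by (simp add: zero_less_mult_iff)
  have lnW1: "ln (\<Sum>j\<in>I. wt h1 j) = ln W + ln F1" using W1 Wp F1p by (simp add: ln_mult)
  have lnW0: "ln (\<Sum>j\<in>I. wt h0 j) = ln W + ln F0" using W0 Wp F0p by (simp add: ln_mult)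
  have lnw1: "ln (wt h1 i) = ln (w i) - \<eta> * (if Ep i xs x then c1 else 0)"
    using wp[of i] by (simp add: wt1 ln_mult)
  have lnw0: "ln (wt h0 i) = ln (w i) - \<eta> * (if Ep i xs x then -1 else 0)"
    using wp[of i] by (simp add: wt0 ln_mult)
  have mf1: "map fst h1 = xs @ [x]" "map fst h0 = xs @ [x]" by (simp_all add: h1_def h0_def xs_def)
  have IH1: "exp_mistakes AL h1 rest \<le> R + D + (ln F1 / \<eta> + (if Ep i xs x then c1 else 0)) + 2 * \<eta> * n"
    using Cons.IH[of h1] mf1 lnW1 lnw1 eta0 unfolding R_def D_def n_def
    by (simp add: diff_divide_distrib add_divide_distrib algebra_simps)
  have IH0: "exp_mistakes AL h0 rest \<le> R + D + (ln F0 / \<eta> + (if Ep i xs x then -1 else 0)) + 2 * \<eta> * n"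
    using Cons.IH[of h0] mf1 lnW0 lnw0 eta0 unfolding R_def D_def n_def
    by (simp add: diff_divide_distrib add_divide_distrib algebra_simps)
  have AL: "AL hist x = q" by (simp add: AL_def q_def w_def xs_def)
  have EM: "exp_mistakes AL hist (p # rest)
     = q * ((if y then 0 else 1) + exp_mistakes AL h1 rest) + (1 - q) * ((if y then 1 else 0) + exp_mistakes AL h0 rest)"
    by (simp add: p AL h1_def h0_def)
  have "exp_mistakes AL hist (p # rest) \<le>
       q * ((if y then 0 else 1) + (R + D + (ln F1 / \<eta> + (if Ep i xs x then c1 else 0)) + 2 * \<eta> * n))
     + (1 - q) * ((if y then 1 else 0) + (R + D + (ln F0 / \<eta> + (if Ep i xs x then -1 else 0)) + 2 * \<eta> * n))"
    unfolding EM using IH1 IH0 q01 by (intro add_mono mult_left_mono) auto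
  also have "\<dots> = (q * (if y then 0 else 1) + (1 - q) * (if y then 1 else 0)
     + q * (ln F1 / \<eta> + (if Ep i xs x then c1 else 0))
     + (1 - q) * (ln F0 / \<eta> + (if Ep i xs x then -1 else 0))) + (R + D + 2 * \<eta> * n)"
    by (simp add: algebra_simps)
  also have "\<dots> \<le> ((if Ep i xs x \<noteq> y then 1 else 0) + 2 * \<eta>) + (R + D + 2 * \<eta> * n)"
    using step_ineq[of q \<eta> "Ep i xs x" y, OF q01 eta0 eta1 qe] unfolding F1_def F0_def c1_def by simp
  also have "\<dots> = mis i (map fst hist) (p # rest)
     + (ln (\<Sum>j\<in>I. wt hist j) - ln (wt hist i)) / \<eta> + 2 * \<eta> * length (p # rest)"
    by (simp add: p R_def D_def n_def xs_def W_def w_def algebra_simps)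
  finally show ?case .
qed

lemma main0:
  assumes "i \<in> I"
  shows "exp_mistakes AL [] s \<le> mis i [] s + ln (card I) / \<eta> + 2 * \<eta> * length s"
  using main[OF assms, of "[]" s] by (simp add: wt_nil)

end


lemma mistakes_nil[simp]: "mistakes h [] = 0" by (simp add: mistakes_def)
lemma mistakes_cons[simp]: "mistakes h ((x, y) # r) = (if h x \<noteq> y then 1 else 0) + mistakes h r"
  by (simp add: mistakes_def)

lemma em_bounds:
  assumes "valid_learner A"
  shows "0 \<le> exp_mistakes A hist s \<and> exp_mistakes A hist s \<le> length s"
proof (induction s arbitrary: hist)
  case Nil then show ?case by simp
next
  case (Cons p rest)
  obtain x y where p: "p = (x, y)" by (cases p)
  have a: "0 \<le> A hist x" "A hist x \<le> 1" using assms by (auto simp: valid_learner_def)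
  let ?a = "A hist x"
  let ?E1 = "exp_mistakes A (hist @ [(x, True, Some y)]) rest"
  let ?E0 = "exp_mistakes A (hist @ [(x, False, None)]) rest"
  have b1: "0 \<le> ?E1" "?E1 \<le> length rest" using Cons by auto
  have b0: "0 \<le> ?E0" "?E0 \<le> length rest" using Cons by auto
  have m1: "0 \<le> (if y then 0 else 1::real)" "(if y then 0 else 1::real) \<le> 1" by auto
  have m0: "0 \<le> (if y then 1 else 0::real)" "(if y then 1 else 0::real) \<le> 1" by auto
  have "0 \<le> ?a * ((if y then 0 else 1) + ?E1) + (1 - ?a) * ((if y then 1 else 0) + ?E0)"
    using a b1 b0 m1 m0 by (intro add_nonneg_nonneg mult_nonneg_nonneg) auto
  moreover have "?a * ((if y then 0 else 1) + ?E1) + (1 - ?a) * ((if y then 1 else 0) + ?E0)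
      \<le> ?a * (1 + length rest) + (1 - ?a) * (1 + length rest)"
    using a b1 b0 m1 m0 by (intro add_mono mult_left_mono) auto
  ultimately show ?case by (simp add: p algebra_simps)
qed

lemma INF_attained:
  assumes "H \<noteq> {}"
  shows "\<exists>h\<in>H. (INF g\<in>H. mistakes g s) = mistakes h s"
proof -
  have "(INF g\<in>H. mistakes g s) \<in> (\<lambda>g. mistakes g s) ` H"
    using Inf_nat_def1[of "(\<lambda>g. mistakes g s) ` H"] assms by simp
  then show ?thesis by auto
qed

lemma INF_le: "h \<in> H \<Longrightarrow> (INF g\<in>H. mistakes g s) \<le> mistakes h s"
  by (rule cINF_lower) auto

lemma regret_ge:
  fixes H :: "('x \<Rightarrow> bool) set"
  assumes "valid_learner A" "length s = T"
  shows "exp_mistakes A [] s - real (INF g\<in>H. mistakes g s) \<le> regret A T H"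
  unfolding regret_def
proof (rule cSUP_upper)
  show "s \<in> {s. length s = T}" using assms by simp
  show "bdd_above ((\<lambda>s. exp_mistakes A [] s - real (INF g\<in>H. mistakes g s)) ` {s. length s = T})"
  proof (rule bdd_aboveI2)
    fix s :: "('x \<times> bool) list" assume "s \<in> {s. length s = T}"
    then show "exp_mistakes A [] s - real (INF g\<in>H. mistakes g s) \<le> real T"
      using em_bounds[OF assms(1), of "[]" s] by simp
  qed
qed

lemma regret_le:
  fixes H :: "('x \<Rightarrow> bool) set"
  assumes "valid_learner A" "\<And>s. length s = T \<Longrightarrow> exp_mistakes A [] s - real (INF g\<in>H. mistakes g s) \<le> B"
  shows "regret A T H \<le> B"
  unfolding regret_def
proof (rule cSUP_least)
  show "{s :: ('x \<times> bool) list. length s = T} \<noteq> {}"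
    by (metis (mono_tags, lifting) empty_iff length_replicate mem_Collect_eq)
  fix s assume "s \<in> {s :: ('x \<times> bool) list. length s = T}"
  then show "exp_mistakes A [] s - real (INF g\<in>H. mistakes g s) \<le> B" using assms(2) by simp
qed

lemma regret_nonneg:
  fixes H :: "('x \<Rightarrow> bool) set"
  assumes "valid_learner A" "H \<noteq> {}"
  shows "0 \<le> regret A T H"
proof -
  obtain h where h: "h \<in> H" using assms by auto
  define s where "s = replicate T (undefined :: 'x, h undefined)"
  have "mistakes h s = 0" by (simp add: s_def mistakes_def)
  then have "(INF g\<in>H. mistakes g s) = 0" using INF_le[OF h, of s] by simp
  moreover have "length s = T" by (simp add: s_def)
  moreover have "exp_mistakes A [] s - real (INF g\<in>H. mistakes g s) \<le> regret A T H"
    using assms(1) \<open>length s = T\<close> by (rule regret_ge)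
  ultimately show ?thesis using em_bounds[OF assms(1), of "[]" s] by simp
qed

lemma valid_ne: "{A :: 'x learner. valid_learner A} \<noteq> {}"
proof -
  have "valid_learner (\<lambda>_ _. 0 :: real)" by (simp add: valid_learner_def)
  then show ?thesis by blast
qed

lemma minimax_le:
  assumes "valid_learner A" "H \<noteq> {}"
  shows "minimax_regret T H \<le> regret A T H"
  unfolding minimax_regret_def
proof (rule cINF_lower)
  show "A \<in> {A. valid_learner A}" using assms by simp
  show "bdd_below ((\<lambda>A. regret A T H) ` {A. valid_learner A})"
    using regret_nonneg[OF _ assms(2)] by (intro bdd_belowI2[of _ 0]) auto
qed

lemma minimax_ge:
  assumes "\<And>A. valid_learner A \<Longrightarrow> c \<le> regret A T H"
  shows "c \<le> minimax_regret T H"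
  unfolding minimax_regret_def by (rule cINF_greatest[OF valid_ne]) (use assms in auto)

lemma card_sets_le: "card {M. M \<subseteq> {..<T} \<and> card M \<le> d} \<le> (T + 1) ^ d"
proof (induction d)
  case 0
  have "M \<subseteq> {..<T} \<Longrightarrow> finite M" for M :: "nat set" by (rule finite_subset) auto
  then have "{M. M \<subseteq> {..<T} \<and> card M \<le> 0} = {{}}" by auto
  then show ?case by simp
next
  case (Suc d)
  let ?S = "\<lambda>d. {M. M \<subseteq> {..<T} \<and> card M \<le> d}"
  have fin: "finite (?S d)" by (rule finite_subset[of _ "Pow {..<T}"]) auto
  have sub: "?S (Suc d) \<subseteq> ?S d \<union> (\<Union>t\<in>{..<T}. insert t ` ?S d)"
  proof
    fix M assume M: "M \<in> ?S (Suc d)"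
    show "M \<in> ?S d \<union> (\<Union>t\<in>{..<T}. insert t ` ?S d)"
    proof (cases "card M \<le> d")
      case True then show ?thesis using M by auto
    next
      case False
      then have c: "card M = Suc d" using M by simp
      then obtain t where t: "t \<in> M" by (metis card.empty ex_in_conv nat.distinct(1))
      have finM: "finite M" using M finite_subset by blast
      have "M - {t} \<in> ?S d" using M c t finM by auto
      moreover have "M = insert t (M - {t})" using t by auto
      moreover have "t \<in> {..<T}" using M t by auto
      ultimately show ?thesis by blast
    qed
  qed
  have "card (?S (Suc d)) \<le> card (?S d \<union> (\<Union>t\<in>{..<T}. insert t ` ?S d))"
    using sub fin by (intro card_mono) auto
  also have "\<dots> \<le> card (?S d) + card (\<Union>t\<in>{..<T}. insert t ` ?S d)" by (rule card_Un_le)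
  also have "card (\<Union>t\<in>{..<T}. insert t ` ?S d) \<le> (\<Sum>t\<in>{..<T}. card (insert t ` ?S d))"
    by (rule card_UN_le) simp
  also have "\<dots> \<le> (\<Sum>t\<in>{..<T}. card (?S d))" by (intro sum_mono card_image_le fin)
  also have "\<dots> = T * card (?S d)" by simp
  finally have "card (?S (Suc d)) \<le> (T + 1) * card (?S d)" by simp
  also have "\<dots> \<le> (T + 1) * (T + 1) ^ d" using Suc.IH by (rule mult_le_mono2)
  finally show ?case by simp
qed



lemma (in ew) mis_eq:
  assumes "\<forall>t<length s. Ep i (xs @ map fst (take t s)) (fst (s!t)) = h (fst (s!t))"
  shows "mis i xs s = real (mistakes h s)"
  using assms
proof (induction s arbitrary: xs)
  case Nil then show ?case by simp
next
  case (Cons p r)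
  obtain x y where p: "p = (x, y)" by (cases p)
  have h0: "Ep i xs x = h x" using Cons.prems[rule_format, of 0] by (simp add: p)
  have "\<forall>t<length r. Ep i ((xs @ [x]) @ map fst (take t r)) (fst (r!t)) = h (fst (r!t))"
  proof (intro allI impI)
    fix t assume "t < length r"
    then show "Ep i ((xs @ [x]) @ map fst (take t r)) (fst (r!t)) = h (fst (r!t))"
      using Cons.prems[rule_format, of "Suc t"] by (simp add: p)
  qed
  then have "mis i (xs @ [x]) r = real (mistakes h r)" by (rule Cons.IH)
  then show ?case using h0 by (simp add: p)
qed

lemma upper_gen:
  fixes H :: "('x \<Rightarrow> bool) set"
  assumes ne: "H \<noteq> {}" and bnd: "\<And>k. shatters_depth H k \<Longrightarrow> k \<le> d"
    and e: "0 < \<eta>" "\<eta> \<le> 1"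
  shows "minimax_regret T H \<le> ln (card {M. M \<subseteq> {..<T} \<and> card M \<le> d}) / \<eta> + 2 * \<eta> * T"
proof -
  interpret L: lclass H d by unfold_locales (rule bnd)
  define I where "I = {M. M \<subseteq> {..<T} \<and> card M \<le> d}"
  have finI: "finite I" unfolding I_def by (rule finite_subset[of _ "Pow {..<T}"]) auto
  have neI: "I \<noteq> {}" unfolding I_def by auto
  interpret E: ew I L.pred \<eta> by unfold_locales (use finI neI e in auto)
  have "regret E.AL T H \<le> ln (card I) / \<eta> + 2 * \<eta> * T"
  proof (rule regret_le[OF E.valid])
    fix s :: "('x \<times> bool) list" assume len: "length s = T"
    obtain h where h: "h \<in> H" "(INF g\<in>H. mistakes g s) = mistakes h s"
      using INF_attained[OF ne] by blast
    obtain M where M: "M \<subseteq> {..<length (map fst s)}" "card M \<le> d"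
      "\<forall>t<length (map fst s). L.pred M (take t (map fst s)) (map fst s ! t) = h (map fst s ! t)"
      using L.cover[OF h(1)] by blast
    have MI: "M \<in> I" using M len by (auto simp: I_def)
    have "\<forall>t<length s. L.pred M ([] @ map fst (take t s)) (fst (s!t)) = h (fst (s!t))"
      using M(3) by (simp add: take_map)
    then have mis: "E.mis M [] s = real (mistakes h s)" by (rule E.mis_eq)
    show "exp_mistakes E.AL [] s - real (INF g\<in>H. mistakes g s) \<le> ln (card I) / \<eta> + 2 * \<eta> * T"
      using E.main0[OF MI, of s] mis h(2) len by simp
  qed
  moreover have "minimax_regret T H \<le> regret E.AL T H" by (rule minimax_le[OF E.valid ne])
  ultimately show ?thesis by (simp add: I_def)
qed

lemma ln2_ge: "1/2 \<le> ln (2::real)"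
proof -
  have "ln (1/2::real) \<le> 1/2 - 1" by (rule ln_le_minus_one) simp
  moreover have "ln (1/2::real) = - ln 2" by (simp add: ln_div)
  ultimately show ?thesis by simp
qed

lemma ln4_ge: "1 \<le> ln (4::real)"
proof -
  have "ln (4::real) = ln (2 * 2)" by simp
  also have "\<dots> = ln 2 + ln 2" by (simp only: ln_mult) simp_all
  finally show ?thesis using ln2_ge by simp
qed

lemma upper:
  fixes H :: "('x \<Rightarrow> bool) set"
  assumes ne: "H \<noteq> {}" and bnd: "\<And>k. shatters_depth H k \<Longrightarrow> k \<le> d"
    and dT: "d \<le> T" and T2: "2 \<le> T"
  shows "minimax_regret T H \<le> 3 * sqrt (real d * real T * ln (real T))"
proof -
  define N where "N = card {M. M \<subseteq> {..<T} \<and> card M \<le> d}"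
  have fin: "finite {M. M \<subseteq> {..<T} \<and> card M \<le> d}" by (rule finite_subset[of _ "Pow {..<T}"]) auto
  have "{} \<in> {M. M \<subseteq> {..<T} \<and> card M \<le> d}" by simp
  then have N1: "1 \<le> N" unfolding N_def using fin by (metis One_nat_def card_gt_0_iff empty_iff less_eq_Suc_le)
  have NT: "N \<le> (T + 1) ^ d" unfolding N_def by (rule card_sets_le)
  have lnN: "ln (real N) \<le> real d * ln (real T + 1)"
  proof -
    have "real N \<le> (real T + 1) ^ d" using NT by (metis of_nat_Suc of_nat_le_iff of_nat_power Suc_eq_plus1 add.commute)
    then have "ln (real N) \<le> ln ((real T + 1) ^ d)" using N1 by simp
    also have "\<dots> = real d * ln (real T + 1)" by (simp add: ln_realpow)
    finally show ?thesis .
  qed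
  have lnN0: "0 \<le> ln (real N)" using N1 by simp
  have gen: "\<And>\<eta>. 0 < \<eta> \<Longrightarrow> \<eta> \<le> 1 \<Longrightarrow> minimax_regret T H \<le> ln (real N) / \<eta> + 2 * \<eta> * T"
    unfolding N_def by (rule upper_gen[OF ne bnd])
  have Tp: "0 < real T" using T2 by simp
  have lnT: "0 < ln (real T)" using T2 by simp
  show ?thesis
  proof (cases "d = 0")
    case True
    then have "N = 1" using N1 NT by simp
    then have g0: "\<And>\<eta>::real. 0 < \<eta> \<Longrightarrow> \<eta> \<le> 1 \<Longrightarrow> minimax_regret T H \<le> 2 * \<eta> * T" using gen by simp
    have "minimax_regret T H \<le> 0"
    proof (rule ccontr)
      assume "\<not> minimax_regret T H \<le> 0"
      then have m: "0 < minimax_regret T H" by simp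
      define \<eta> where "\<eta> = min 1 (minimax_regret T H / (4 * T))"
      have "0 < \<eta>" using m Tp by (simp add: \<eta>_def)
      moreover have "\<eta> \<le> 1" by (simp add: \<eta>_def)
      ultimately have "minimax_regret T H \<le> 2 * \<eta> * T" by (rule g0)
      moreover have "2 * \<eta> * T \<le> 2 * (minimax_regret T H / (4 * T)) * T"
        using Tp by (intro mult_right_mono mult_left_mono) (auto simp: \<eta>_def)
      moreover have "2 * (minimax_regret T H / (4 * T)) * T = minimax_regret T H / 2" using Tp by simp
      ultimately show False using m by simp
    qed
    then show ?thesis using True by simp
  next
    case False
    then have d1: "1 \<le> real d" by simp
    show ?thesis
    proof (cases "real T \<le> 9 * real d * ln (real T)")
      case True
      have "valid_learner ((\<lambda>_ _. 0) :: 'x learner)" (is "valid_learner ?A") by (simp add: valid_learner_def)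
      moreover have "regret ?A T H \<le> real T"
      proof (rule regret_le[OF \<open>valid_learner ?A\<close>])
        fix s :: "('x \<times> bool) list" assume "length s = T"
        then show "exp_mistakes ?A [] s - real (INF g\<in>H. mistakes g s) \<le> real T"
          using em_bounds[OF \<open>valid_learner ?A\<close>, of "[]" s] by simp
      qed
      moreover have "minimax_regret T H \<le> regret ?A T H" by (rule minimax_le[OF \<open>valid_learner ?A\<close> ne])
      ultimately have m: "minimax_regret T H \<le> real T" by linarith
      have "(real T)^2 \<le> 9 * (real d * real T * ln (real T))"
        using True Tp by (simp add: power2_eq_square mult_right_mono algebra_simps)
      then have "real T \<le> sqrt (9 * (real d * real T * ln (real T)))" by (rule real_le_rsqrt)
      also have "\<dots> = 3 * sqrt (real d * real T * ln (real T))" by (simp add: real_sqrt_mult)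
      finally show ?thesis using m by simp
    next
      case False
      then have big: "9 * real d * ln (real T) < real T" by simp
      have T9: "9 \<le> real T"
      proof (rule ccontr)
        assume "\<not> 9 \<le> real T"
        then have T8: "real T \<le> 8" by simp
        have "real T \<le> 9 * ln (real T)"
        proof (cases "T \<le> 3")
          case True
          have "ln 2 \<le> ln (real T)" using T2 by simp
          then show ?thesis using True ln2_ge by simp
        next
          case False
          then have "ln 4 \<le> ln (real T)" by simp
          then show ?thesis using T8 ln4_ge by simp
        qed
        moreover have "9 * ln (real T) \<le> 9 * real d * ln (real T)" using d1 lnT by simp
        ultimately show False using big by simp
      qed
      have lnT1: "ln (real T + 1) \<le> 9/8 * ln (real T)"
      proof -
        have "real T + 1 = real T * (1 + 1 / real T)" using Tp by (simp add: field_simps)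
        moreover have "0 < 1 + 1 / real T" using Tp by (simp add: add_pos_pos)
        ultimately have "ln (real T + 1) = ln (real T) + ln (1 + 1 / real T)"
          using ln_mult[of "real T" "1 + 1 / real T"] Tp \<open>0 < 1 + 1 / real T\<close> by simp
        also have "ln (1 + 1 / real T) \<le> 1 / real T" by (rule ln_add_one_self_le_self) simp
        also have "1 / real T \<le> 1 / 8 * ln (real T)"
        proof -
          have "ln 4 \<le> ln (real T)" using T9 by simp
          then have "1 \<le> ln (real T)" using ln4_ge by simp
          moreover have "1 / real T \<le> 1 / 8" using T9 by (simp add: divide_simps)
          ultimately show ?thesis by simp
        qed
        finally show ?thesis by simp
      qed
      define L where "L = real d * ln (real T + 1)"
      have Lp: "0 < L" using d1 Tp by (simp add: L_def)
      have LL: "L \<le> 9/8 * real d * ln (real T)" using lnT1 d1 by (simp add: L_def)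
      define \<eta> where "\<eta> = sqrt (L / (2 * real T))"
      have ep: "0 < \<eta>" using Lp Tp by (simp add: \<eta>_def)
      have e2: "\<eta>^2 = L / (2 * real T)" using Lp Tp by (simp add: \<eta>_def)
      have "L \<le> 2 * real T" using LL big d1 lnT by simp
      then have "L / (2 * real T) \<le> 1" using Tp by simp
      then have e1: "\<eta> \<le> 1" by (simp add: \<eta>_def)
      have "minimax_regret T H \<le> ln (real N) / \<eta> + 2 * \<eta> * T" by (rule gen[OF ep e1])
      also have "\<dots> \<le> L / \<eta> + 2 * \<eta> * T" using lnN ep by (simp add: L_def divide_right_mono)
      also have "L / \<eta> + 2 * \<eta> * T = 2 * L / \<eta>"
      proof -
        have "2 * \<eta> * T = 2 * \<eta>^2 * T / \<eta>" using ep by (simp add: power2_eq_square)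
        also have "\<dots> = L / \<eta>" using e2 Tp by simp
        finally show ?thesis by simp
      qed
      also have "2 * L / \<eta> \<le> 3 * sqrt (real d * real T * ln (real T))"
      proof -
        have "(2 * L / \<eta>)^2 = 4 * L^2 / \<eta>^2" by (simp add: power_divide power_mult_distrib)
        also have "\<dots> = 4 * L^2 / (L / (2 * real T))" by (simp only: e2)
        also have "\<dots> = 8 * L * real T" using Tp Lp by (simp add: power2_eq_square field_simps)
        also have "\<dots> \<le> 8 * (9/8 * real d * ln (real T)) * real T" using LL Tp by simp
        also have "\<dots> = 9 * (real d * real T * ln (real T))" by simp
        finally have "2 * L / \<eta> \<le> sqrt (9 * (real d * real T * ln (real T)))" by (rule real_le_rsqrt)
        also have "\<dots> = 3 * sqrt (real d * real T * ln (real T))" by (simp add: real_sqrt_mult)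
        finally show ?thesis .
      qed
      finally show ?thesis .
    qed
  qed
qed



fun sumL :: "nat \<Rightarrow> (bool list \<Rightarrow> real) \<Rightarrow> real" where
  "sumL 0 F = F []"
| "sumL (Suc n) F = sumL n (\<lambda>ys. F (True # ys)) + sumL n (\<lambda>ys. F (False # ys))"

lemma sumL_cong: "(\<And>ys. length ys = n \<Longrightarrow> F ys = G ys) \<Longrightarrow> sumL n F = sumL n G"
proof (induction n arbitrary: F G)
  case 0 then show ?case by simp
next
  case (Suc n)
  have "sumL n (\<lambda>ys. F (True # ys)) = sumL n (\<lambda>ys. G (True # ys))" by (rule Suc.IH) (simp add: Suc.prems)
  moreover have "sumL n (\<lambda>ys. F (False # ys)) = sumL n (\<lambda>ys. G (False # ys))" by (rule Suc.IH) (simp add: Suc.prems)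
  ultimately show ?case by simp
qed

lemma sumL_add: "sumL n (\<lambda>ys. F ys + G ys) = sumL n F + sumL n G"
  by (induction n arbitrary: F G) auto

lemma sumL_diff: "sumL n (\<lambda>ys. F ys - G ys) = sumL n F - sumL n G"
  by (induction n arbitrary: F G) auto

lemma sumL_cmult: "sumL n (\<lambda>ys. c * F ys) = c * sumL n F"
  by (induction n arbitrary: F) (auto simp: algebra_simps)

lemma sumL_const: "sumL n (\<lambda>ys. c) = 2 ^ n * c"
  by (induction n) auto

lemma sumL_mono: "(\<And>ys. length ys = n \<Longrightarrow> F ys \<le> G ys) \<Longrightarrow> sumL n F \<le> sumL n G"
proof (induction n arbitrary: F G)
  case 0 then show ?case by simp
next
  case (Suc n)
  have "sumL n (\<lambda>ys. F (True # ys)) \<le> sumL n (\<lambda>ys. G (True # ys))" by (rule Suc.IH) (simp add: Suc.prems)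
  moreover have "sumL n (\<lambda>ys. F (False # ys)) \<le> sumL n (\<lambda>ys. G (False # ys))" by (rule Suc.IH) (simp add: Suc.prems)
  ultimately show ?case by simp
qed

lemma sumL_less: "(\<And>ys. length ys = n \<Longrightarrow> F ys < G ys) \<Longrightarrow> sumL n F < sumL n G"
proof (induction n arbitrary: F G)
  case 0 then show ?case by simp
next
  case (Suc n)
  have "sumL n (\<lambda>ys. F (True # ys)) < sumL n (\<lambda>ys. G (True # ys))" by (rule Suc.IH) (simp add: Suc.prems)
  moreover have "sumL n (\<lambda>ys. F (False # ys)) < sumL n (\<lambda>ys. G (False # ys))" by (rule Suc.IH) (simp add: Suc.prems)
  ultimately show ?case by simp
qed

lemma sumL_exists:
  assumes "2 ^ n * c \<le> sumL n F"
  shows "\<exists>ys. length ys = n \<and> c \<le> F ys"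
proof (rule ccontr)
  assume "\<not> ?thesis"
  then have "\<And>ys. length ys = n \<Longrightarrow> F ys < c" by force
  then have "sumL n F < sumL n (\<lambda>_. c)" by (rule sumL_less)
  then show False using assms by (simp add: sumL_const)
qed

lemma sumL_split: "sumL (k + m) F = sumL k (\<lambda>zs. sumL m (\<lambda>ws. F (zs @ ws)))"
  by (induction k arbitrary: F) auto

definition cnt :: "bool list \<Rightarrow> nat" where "cnt zs = length (filter id zs)"

lemma cnt_simps[simp]: "cnt [] = 0" "cnt (True # zs) = Suc (cnt zs)" "cnt (False # zs) = cnt zs"
  by (simp_all add: cnt_def)

lemma cnt_le: "cnt zs \<le> length zs"
  by (simp add: cnt_def)

definition GG :: "nat \<Rightarrow> int \<Rightarrow> real" where
  "GG k c = sumL k (\<lambda>zs. real_of_int \<bar>c + 2 * int (cnt zs) - int (length zs)\<bar>)"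

definition ZZ :: "nat \<Rightarrow> int \<Rightarrow> real" where
  "ZZ k c = sumL k (\<lambda>zs. if c + 2 * int (cnt zs) - int (length zs) = 0 then 1 else 0)"

lemma GG_rec: "GG (Suc k) c = GG k (c + 1) + GG k (c - 1)"
proof -
  have "sumL k (\<lambda>zs. real_of_int \<bar>c + 2 * int (cnt (True # zs)) - int (length (True # zs))\<bar>)
      = GG k (c + 1)" unfolding GG_def by (rule sumL_cong) (simp add: algebra_simps)
  moreover have "sumL k (\<lambda>zs. real_of_int \<bar>c + 2 * int (cnt (False # zs)) - int (length (False # zs))\<bar>)
      = GG k (c - 1)" unfolding GG_def by (rule sumL_cong) (simp add: algebra_simps)
  ultimately show ?thesis by (simp add: GG_def)
qed

lemma ZZ_rec: "ZZ (Suc k) c = ZZ k (c + 1) + ZZ k (c - 1)"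
proof -
  have 1: "sumL k (\<lambda>zs. if c + 2 * int (cnt (True # zs)) - int (length (True # zs)) = 0 then 1 else 0)
      = ZZ k (c + 1)" unfolding ZZ_def by (rule sumL_cong) (simp add: algebra_simps)
  have 2: "sumL k (\<lambda>zs. if c + 2 * int (cnt (False # zs)) - int (length (False # zs)) = 0 then 1 else 0)
      = ZZ k (c - 1)" unfolding ZZ_def by (rule sumL_cong) (simp add: algebra_simps)
  have "ZZ (Suc k) c = sumL k (\<lambda>zs. if c + 2 * int (cnt (True # zs)) - int (length (True # zs)) = 0 then 1 else 0)
     + sumL k (\<lambda>zs. if c + 2 * int (cnt (False # zs)) - int (length (False # zs)) = 0 then 1 else 0)"
    by (simp only: ZZ_def sumL.simps)
  then show ?thesis by (simp only: 1 2)
qed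

lemma GG_ZZ: "GG (Suc k) c = 2 * GG k c + 2 * ZZ k c"
proof (induction k arbitrary: c)
  case 0
  have "real_of_int \<bar>c + 1\<bar> + real_of_int \<bar>c - 1\<bar> = 2 * real_of_int \<bar>c\<bar> + 2 * (if c = 0 then 1 else 0)"
    by (cases "c = 0"; cases "c > 0") auto
  then show ?case by (simp add: GG_rec GG_def ZZ_def)
next
  case (Suc k)
  show ?case using Suc.IH[of "c + 1"] Suc.IH[of "c - 1"]
    by (simp add: GG_rec[of "Suc k"] GG_rec[of k] ZZ_rec[of k] algebra_simps)
qed

definition NN :: "nat \<Rightarrow> nat \<Rightarrow> real" where
  "NN k a = sumL k (\<lambda>zs. if cnt zs = a then 1 else 0)"

lemma NN_choose: "NN k a = real (k choose a)"
proof (induction k arbitrary: a)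
  case 0 then show ?case by (simp add: NN_def)
next
  case (Suc k)
  have T: "sumL k (\<lambda>zs. if cnt (True # zs) = a then 1 else 0) = (if a = 0 then 0 else NN k (a - 1))"
  proof (cases a)
    case 0 then show ?thesis by (simp add: sumL_const)
  next
    case (Suc b) then show ?thesis by (simp add: NN_def)
  qed
  have F: "sumL k (\<lambda>zs. if cnt (False # zs) = a then 1 else 0) = NN k a" by (simp add: NN_def)
  have "NN (Suc k) a = (if a = 0 then 0 else NN k (a - 1)) + NN k a"
    using T F by (simp add: NN_def)
  then show ?case using Suc.IH by (cases a) auto
qed

lemma ZZ_even: "ZZ (2 * m) 0 = real ((2 * m) choose m)"
proof -
  have "ZZ (2 * m) 0 = NN (2 * m) m" unfolding ZZ_def NN_def by (rule sumL_cong) auto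
  then show ?thesis by (simp add: NN_choose)
qed

lemma ZZ_odd: "ZZ (Suc (2 * m)) 0 = 0"
proof -
  have par: "2 * int a \<noteq> int (Suc (2 * m))" for a :: nat
  proof
    assume "2 * int a = int (Suc (2 * m))"
    then have "2 * a = Suc (2 * m)" by linarith
    then show False by presburger
  qed
  have "ZZ (Suc (2 * m)) 0 = sumL (Suc (2 * m)) (\<lambda>_. 0)" unfolding ZZ_def
    by (rule sumL_cong) (use par in simp)
  then show ?thesis by (simp add: sumL_const)
qed

definition ee :: "nat \<Rightarrow> real" where "ee k = GG k 0 / 2 ^ k"

lemma ee_Suc: "ee (Suc k) = ee k + ZZ k 0 / 2 ^ k"
  by (simp add: ee_def GG_ZZ field_simps)

definition pp :: "nat \<Rightarrow> real" where "pp m = real ((2 * m) choose m) / 4 ^ m"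

lemma central_ratio: "Suc m * (Suc (Suc (2 * m)) choose Suc m) = 2 * Suc (2 * m) * ((2 * m) choose m)"
proof -
  define n where "n = 2 * m"
  have a: "Suc m * (Suc (Suc n) choose Suc m) = Suc (Suc n) * (Suc n choose m)"
    by (rule Suc_times_binomial)
  have b: "Suc n choose m = Suc n choose Suc m"
    using binomial_symmetric[of m "Suc n"] by (simp add: n_def)
  have c: "Suc m * (Suc n choose Suc m) = Suc n * (n choose m)"
    by (rule Suc_times_binomial)
  have d: "Suc (Suc n) = 2 * Suc m" by (simp add: n_def)
  have "Suc m * (Suc m * (Suc (Suc n) choose Suc m)) = Suc (Suc n) * (Suc m * (Suc n choose Suc m))"
    by (simp only: a b mult.left_commute)
  also have "\<dots> = Suc m * (2 * Suc n * (n choose m))" by (simp only: c d mult_ac)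
  finally have "Suc m * (Suc m * (Suc (Suc n) choose Suc m)) = Suc m * (2 * Suc n * (n choose m))" .
  then have "Suc m * (Suc (Suc n) choose Suc m) = 2 * Suc n * (n choose m)" 
    using mult_left_cancel[of "Suc m"] by blast
  then show ?thesis by (simp only: n_def)
qed

lemma pp_Suc: "pp (Suc m) = pp m * (2 * m + 1) / (2 * m + 2)"
proof -
  have "real (Suc m * (Suc (Suc (2 * m)) choose Suc m)) = real (2 * Suc (2 * m) * ((2 * m) choose m))"
    using central_ratio by (simp only:)
  then have "real (Suc m) * real (Suc (Suc (2 * m)) choose Suc m) = 2 * real (Suc (2 * m)) * real ((2 * m) choose m)"
    by (simp only: of_nat_mult of_nat_numeral)
  then have r: "real (Suc (Suc (2 * m)) choose Suc m) = 2 * (2 * m + 1) * real ((2 * m) choose m) / (m + 1)"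
    by (simp add: divide_simps del: binomial_Suc_Suc) (simp add: algebra_simps)
  have e: "2 * Suc m = Suc (Suc (2 * m))" by simp
  have "pp (Suc m) = real (Suc (Suc (2 * m)) choose Suc m) / 4 ^ (Suc m)" by (simp only: pp_def e)
  also have "\<dots> = 2 * (2 * m + 1) * real ((2 * m) choose m) / (m + 1) / (4 * 4 ^ m)" by (simp only: r power_Suc)
  also have "\<dots> = pp m * (2 * m + 1) / (2 * m + 2)"
  proof -
    have g: "2 * (2 * x + 1) * C / (x + 1) / (4 * P) = C / P * (2 * x + 1) / (2 * x + 2)"
      if "0 \<le> x" "0 < P" for x C P :: real
    proof -
      have "2 * x + 2 = 2 * (x + 1)" by simp
      then show ?thesis using that by (simp add: divide_simps) (simp add: algebra_simps)
    qed
    show ?thesis unfolding pp_def using g[of "real m" "4 ^ m" "real ((2 * m) choose m)"] by (simp add: algebra_simps)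
  qed
  finally show ?thesis .
qed
lemma ee_odd_even: "ee (Suc (Suc (2 * m))) = ee (Suc (2 * m))"
  using ee_Suc[of "Suc (2 * m)"] ZZ_odd[of m] by simp

lemma ee_even: "ee (2 * m) = 2 * m * pp m"
proof (induction m)
  case 0 then show ?case by (simp add: ee_def GG_def)
next
  case (Suc m)
  have "ee (2 * Suc m) = ee (Suc (2 * m))" using ee_odd_even[of m] by simp
  also have "\<dots> = ee (2 * m) + pp m" using ee_Suc[of "2 * m"] ZZ_even[of m]
    by (simp add: pp_def power_mult)
  also have "\<dots> = (2 * m + 1) * pp m" using Suc.IH by (simp add: algebra_simps)
  also have "\<dots> = 2 * (Suc m) * pp (Suc m)"
  proof -
    have g: "(2 * x + 1) * p = 2 * (x + 1) * (p * (2 * x + 1) / (2 * x + 2))" if "0 \<le> x" for x p :: real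
    proof -
      have "2 * x + 2 = 2 * (x + 1)" by simp
      then show ?thesis using that by (simp add: divide_simps)
    qed
    show ?thesis unfolding pp_Suc using g[of "real m" "pp m"] by simp
  qed
  finally show ?case by simp
qed

lemma pp_pos: "0 < pp m"
  by (simp add: pp_def)

lemma aux: fixes x p :: real assumes "0 < x" "1 \<le> 4 * x * p^2"
  shows "1 \<le> p^2 * (2 * x + 1)^2 / (x + 1)"
proof -
  have a: "4 * x * (x + 1) \<le> (2 * x + 1)^2" by (simp add: power2_eq_square algebra_simps)
  have b: "p^2 * (4 * x * (x + 1)) \<le> p^2 * (2 * x + 1)^2" by (rule mult_left_mono[OF a]) simp
  have c: "1 * (x + 1) \<le> (4 * x * p^2) * (x + 1)" using assms by (intro mult_right_mono) auto
  have "x + 1 \<le> p^2 * (2 * x + 1)^2" using b c by (simp add: algebra_simps)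
  then show ?thesis using assms by (simp add: le_divide_eq)
qed

lemma pp_lower: "1 \<le> m \<Longrightarrow> 1 \<le> 4 * m * (pp m)^2"
proof (induction m rule: nat_induct_at_least)
  case base then show ?case by (simp add: pp_def power2_eq_square)
next
  case (Suc m)
  have g: "4 * (x + 1) * (p * (2 * x + 1) / (2 * x + 2))^2 = p^2 * (2 * x + 1)^2 / (x + 1)"
    if "0 \<le> x" for x p :: real
  proof -
    have "2 * x + 2 = 2 * (x + 1)" by simp
    then show ?thesis using that by (simp add: divide_simps power2_eq_square) (simp add: algebra_simps)
  qed
  have "4 * real (Suc m) * (pp (Suc m))^2 = (pp m)^2 * (2 * real m + 1)^2 / (real m + 1)"
    unfolding pp_Suc using g[of "real m" "pp m"] by (simp add: ac_simps)
  moreover have "1 \<le> (pp m)^2 * (2 * real m + 1)^2 / (real m + 1)"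
    using aux[of "real m" "pp m"] Suc by simp
  ultimately show ?case by linarith
qed

lemma ee_nonneg: "0 \<le> ee k"
proof -
  have "sumL k (\<lambda>_. 0) \<le> GG k 0" unfolding GG_def by (rule sumL_mono) simp
  then show ?thesis by (simp add: ee_def sumL_const)
qed

lemma ee_even_sq: "real m \<le> (ee (2 * m))^2"
proof (cases "m = 0")
  case True then show ?thesis by simp
next
  case False
  have e: "ee (2 * m) = 2 * real m * pp m" by (rule ee_even)
  have "(ee (2 * m))^2 = real m * (4 * real m * (pp m)^2)" unfolding e by (simp add: power2_eq_square)
  moreover have "1 \<le> 4 * real m * (pp m)^2" using pp_lower False by simp
  ultimately show ?thesis by (simp add: mult_le_cancel_left1)
qed

lemma sqrt_le_of_sq: "x \<le> y^2 \<Longrightarrow> 0 \<le> y \<Longrightarrow> sqrt x \<le> y"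
  by (metis real_sqrt_abs abs_of_nonneg real_sqrt_le_mono)

lemma ee_lower: "sqrt (real ((k + 1) div 2)) \<le> ee k"
proof -
  have "k = 2 * (k div 2) \<or> k = Suc (2 * (k div 2))" by presburger
  then obtain m where m: "k = 2 * m \<or> k = Suc (2 * m)" by blast
  show ?thesis
  proof (cases "k = 2 * m")
    case True
    then have "(k + 1) div 2 = m" by simp
    then show ?thesis using sqrt_le_of_sq[OF ee_even_sq[of m] ee_nonneg] True by simp
  next
    case False
    then have k: "k = Suc (2 * m)" using m by simp
    then have "(k + 1) div 2 = Suc m" by simp
    moreover have "2 * Suc m = Suc (Suc (2 * m))" by simp
    then have "ee (2 * Suc m) = ee k" using ee_odd_even[of m] k by simp
    ultimately show ?thesis using sqrt_le_of_sq[OF ee_even_sq[of "Suc m"] ee_nonneg] by simp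
  qed
qed



fun adaptive :: "nat \<Rightarrow> (bool list \<Rightarrow> ('x \<times> bool) list) \<Rightarrow> bool" where
  "adaptive 0 S \<longleftrightarrow> S [] = []"
| "adaptive (Suc n) S \<longleftrightarrow> (\<exists>x. \<forall>y ys. length ys = n \<longrightarrow> S (y # ys) = (x, y) # tl (S (y # ys)))
      \<and> (\<forall>y. adaptive n (\<lambda>ys. tl (S (y # ys))))"

lemma adaptive_length: "adaptive n S \<Longrightarrow> length ys = n \<Longrightarrow> length (S ys) = n"
proof (induction n arbitrary: S ys)
  case 0 then show ?case by simp
next
  case (Suc n)
  obtain y ys' where ys: "ys = y # ys'" "length ys' = n" using Suc.prems(2) by (cases ys) auto
  obtain x where hx: "\<forall>y ys. length ys = n \<longrightarrow> S (y # ys) = (x, y) # tl (S (y # ys))"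
    and ad: "\<forall>y. adaptive n (\<lambda>ys. tl (S (y # ys)))" using Suc.prems(1) by auto
  have "length (tl (S (y # ys'))) = n" using Suc.IH[OF ad[rule_format, of y] ys(2)] by simp
  then show ?case using hx ys by (metis length_Cons)
qed

lemma em_sum:
  assumes "valid_learner A"
  shows "adaptive n S \<Longrightarrow> sumL n (\<lambda>ys. exp_mistakes A hist (S ys)) = 2 ^ n * real n / 2"
proof (induction n arbitrary: S hist)
  case 0 then show ?case by simp
next
  case (Suc n)
  obtain x where hx: "\<forall>y ys. length ys = n \<longrightarrow> S (y # ys) = (x, y) # tl (S (y # ys))"
    and ad: "\<forall>y. adaptive n (\<lambda>ys. tl (S (y # ys)))" using Suc.prems(1) by auto
  define a where "a = A hist x"
  define S1 where "S1 = (\<lambda>ys. tl (S (True # ys)))"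
  define S0 where "S0 = (\<lambda>ys. tl (S (False # ys)))"
  define c where "c = 2 ^ n * real n / (2::real)"
  have IH1: "sumL n (\<lambda>ys. exp_mistakes A h (S1 ys)) = c" for h
    unfolding S1_def c_def by (rule Suc.IH) (use ad in blast)
  have IH0: "sumL n (\<lambda>ys. exp_mistakes A h (S0 ys)) = c" for h
    unfolding S0_def c_def by (rule Suc.IH) (use ad in blast)
  let ?hT = "hist @ [(x, True, Some True)]" and ?hF = "hist @ [(x, True, Some False)]"
    and ?h0 = "hist @ [(x, False, None)]"
  have "sumL n (\<lambda>ys. exp_mistakes A hist (S (True # ys)))
      = sumL n (\<lambda>ys. a * exp_mistakes A ?hT (S1 ys) + (1 - a) * (1 + exp_mistakes A ?h0 (S1 ys)))"
  proof (rule sumL_cong)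
    fix ys :: "bool list" assume "length ys = n"
    then have "S (True # ys) = (x, True) # S1 ys" using hx by (simp add: S1_def)
    then show "exp_mistakes A hist (S (True # ys))
        = a * exp_mistakes A ?hT (S1 ys) + (1 - a) * (1 + exp_mistakes A ?h0 (S1 ys))"
      by (simp add: a_def)
  qed
  also have "\<dots> = a * sumL n (\<lambda>ys. exp_mistakes A ?hT (S1 ys)) + (1 - a) * sumL n (\<lambda>ys. 1 + exp_mistakes A ?h0 (S1 ys))"
    by (simp only: sumL_add sumL_cmult)
  also have "\<dots> = a * c + (1 - a) * (2 ^ n + c)"
    by (simp only: IH1 sumL_add sumL_const) simp
  finally have T: "sumL n (\<lambda>ys. exp_mistakes A hist (S (True # ys))) = a * c + (1 - a) * (2 ^ n + c)" .
  have "sumL n (\<lambda>ys. exp_mistakes A hist (S (False # ys)))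
      = sumL n (\<lambda>ys. a * (1 + exp_mistakes A ?hF (S0 ys)) + (1 - a) * exp_mistakes A ?h0 (S0 ys))"
  proof (rule sumL_cong)
    fix ys :: "bool list" assume "length ys = n"
    then have "S (False # ys) = (x, False) # S0 ys" using hx by (simp add: S0_def)
    then show "exp_mistakes A hist (S (False # ys))
        = a * (1 + exp_mistakes A ?hF (S0 ys)) + (1 - a) * exp_mistakes A ?h0 (S0 ys)"
      by (simp add: a_def)
  qed
  also have "\<dots> = a * sumL n (\<lambda>ys. 1 + exp_mistakes A ?hF (S0 ys)) + (1 - a) * sumL n (\<lambda>ys. exp_mistakes A ?h0 (S0 ys))"
    by (simp only: sumL_add sumL_cmult)
  also have "\<dots> = a * (2 ^ n + c) + (1 - a) * c"
    by (simp only: IH0 sumL_add sumL_const) simp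
  finally have F: "sumL n (\<lambda>ys. exp_mistakes A hist (S (False # ys))) = a * (2 ^ n + c) + (1 - a) * c" .
  have "sumL (Suc n) (\<lambda>ys. exp_mistakes A hist (S ys)) = a * c + (1 - a) * (2 ^ n + c) + (a * (2 ^ n + c) + (1 - a) * c)"
    using T F by simp
  also have "\<dots> = 2 ^ Suc n * real (Suc n) / 2" by (simp add: c_def algebra_simps)
  finally show ?case .
qed

definition maj :: "bool list \<Rightarrow> bool" where "maj zs = (length zs \<le> 2 * cnt zs)"
definition minc :: "bool list \<Rightarrow> nat" where "minc zs = length (filter (\<lambda>y. maj zs \<noteq> y) zs)"

fun bseq :: "(bool list \<Rightarrow> 'x) \<Rightarrow> nat list \<Rightarrow> bool list \<Rightarrow> ('x \<times> bool) list" where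
  "bseq tr [] ys = []"
| "bseq tr (k # ks) ys = map (\<lambda>y. (tr [], y)) (take k ys) @ bseq (\<lambda>\<sigma>. tr (maj (take k ys) # \<sigma>)) ks (drop k ys)"

fun majs :: "nat list \<Rightarrow> bool list \<Rightarrow> bool list" where
  "majs [] ys = []"
| "majs (k # ks) ys = maj (take k ys) # majs ks (drop k ys)"

fun bmin :: "nat list \<Rightarrow> bool list \<Rightarrow> nat" where
  "bmin [] ys = 0"
| "bmin (k # ks) ys = minc (take k ys) + bmin ks (drop k ys)"

lemma length_majs[simp]: "length (majs ks ys) = length ks"
  by (induction ks arbitrary: ys) auto

lemma adaptive_block:
  "(\<And>zs. length zs = k \<Longrightarrow> adaptive m (G zs)) \<Longrightarrow>
   adaptive (k + m) (\<lambda>ys. map (\<lambda>y. (x, y)) (take k ys) @ G (take k ys) (drop k ys))"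
proof (induction k arbitrary: G)
  case 0
  then have "adaptive m (G [])" by simp
  then show ?case by simp
next
  case (Suc k)
  have A: "\<forall>y ys. length ys = k + m \<longrightarrow>
      (\<lambda>ys. map (\<lambda>y. (x, y)) (take (Suc k) ys) @ G (take (Suc k) ys) (drop (Suc k) ys)) (y # ys)
      = (x, y) # tl ((\<lambda>ys. map (\<lambda>y. (x, y)) (take (Suc k) ys) @ G (take (Suc k) ys) (drop (Suc k) ys)) (y # ys))"
    by simp
  have B: "adaptive (k + m) (\<lambda>ys. tl ((\<lambda>ys. map (\<lambda>y. (x, y)) (take (Suc k) ys) @ G (take (Suc k) ys) (drop (Suc k) ys)) (y # ys)))"
    for y
  proof -
    have "adaptive (k + m) (\<lambda>ys. map (\<lambda>y. (x, y)) (take k ys) @ (\<lambda>zs. G (y # zs)) (take k ys) (drop k ys))"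
      by (rule Suc.IH) (simp add: Suc.prems)
    then show ?thesis by simp
  qed
  show ?case using A B by (simp only: add_Suc adaptive.simps) blast
qed

lemma adaptive_bseq: "adaptive (sum_list ks) (bseq tr ks)"
proof (induction ks arbitrary: tr)
  case Nil then show ?case by simp
next
  case (Cons k ks)
  have "adaptive (k + sum_list ks) (\<lambda>ys. map (\<lambda>y. (tr [], y)) (take k ys) @
        (\<lambda>zs ws. bseq (\<lambda>\<sigma>. tr (maj zs # \<sigma>)) ks ws) (take k ys) (drop k ys))"
    by (rule adaptive_block) (rule Cons.IH)
  moreover have "bseq tr (k # ks) = (\<lambda>ys. map (\<lambda>y. (tr [], y)) (take k ys) @
        (\<lambda>zs ws. bseq (\<lambda>\<sigma>. tr (maj zs # \<sigma>)) ks ws) (take k ys) (drop k ys))"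
    by (rule ext) simp
  ultimately show ?case by simp
qed

lemma mistakes_append: "mistakes h (a @ b) = mistakes h a + mistakes h b"
  by (simp add: mistakes_def)

lemma mistakes_block: "h x = maj zs \<Longrightarrow> mistakes h (map (\<lambda>y. (x, y)) zs) = minc zs"
  by (simp add: mistakes_def minc_def filter_map comp_def)

lemma bseq_mis:
  "(\<forall>i<length ks. h (tr (take i (majs ks ys))) = majs ks ys ! i) \<Longrightarrow> mistakes h (bseq tr ks ys) = bmin ks ys"
proof (induction ks arbitrary: tr ys)
  case Nil then show ?case by (simp add: mistakes_def)
next
  case (Cons k ks)
  have h0: "h (tr []) = maj (take k ys)" using Cons.prems[rule_format, of 0] by simp
  have "\<forall>i<length ks. h ((\<lambda>\<sigma>. tr (maj (take k ys) # \<sigma>)) (take i (majs ks (drop k ys)))) = majs ks (drop k ys) ! i"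
  proof (intro allI impI)
    fix i assume "i < length ks"
    then show "h ((\<lambda>\<sigma>. tr (maj (take k ys) # \<sigma>)) (take i (majs ks (drop k ys)))) = majs ks (drop k ys) ! i"
      using Cons.prems[rule_format, of "Suc i"] by simp
  qed
  then have "mistakes h (bseq (\<lambda>\<sigma>. tr (maj (take k ys) # \<sigma>)) ks (drop k ys)) = bmin ks (drop k ys)"
    by (rule Cons.IH)
  then show ?case using mistakes_block[of h "tr []" "take k ys", OF h0] by (simp add: mistakes_append)
qed

lemma l1: "y + x = (k::real) \<Longrightarrow> x = k / 2 - (2 * y - k) / 2" by (simp add: field_simps)
lemma l2: "y + x = (k::real) \<Longrightarrow> y = k / 2 - (k - 2 * y) / 2" by (simp add: field_simps)

lemma minc_real:
  assumes "length zs = k"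
  shows "real (minc zs) = real k / 2 - real_of_int \<bar>0 + 2 * int (cnt zs) - int (length zs)\<bar> / 2"
proof -
  have c0: "length (filter (\<lambda>y. y) zs) + length (filter (\<lambda>y. \<not> y) zs) = length zs"
    by (rule sum_length_filter_compl)
  have c: "real (length (filter (\<lambda>y. y) zs)) + real (length (filter Not zs)) = real k"
    using c0 assms by (metis (no_types) of_nat_add)
  have cn: "cnt zs = length (filter (\<lambda>y. y) zs)" by (simp add: cnt_def id_def)
  show ?thesis
  proof (cases "maj zs")
    case True
    then have "minc zs = length (filter (\<lambda>y. \<not> y) zs)" by (simp add: minc_def)
    moreover have "length zs \<le> 2 * cnt zs" using True by (simp add: maj_def)
    ultimately show ?thesis using c cn assms l1[OF c] by simp
  next
    case False
    then have "minc zs = length (filter (\<lambda>y. y) zs)" by (simp add: minc_def)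
    moreover have "\<not> length zs \<le> 2 * cnt zs" using False by (simp add: maj_def)
    ultimately show ?thesis using c cn assms l2[OF c] by simp
  qed
qed

lemma sumL_minc: "sumL k (\<lambda>zs. real (minc zs)) = 2 ^ k * (real k / 2 - ee k / 2)"
proof -
  have "sumL k (\<lambda>zs. real (minc zs)) = sumL k (\<lambda>zs. real k / 2 - (1/2) * real_of_int \<bar>0 + 2 * int (cnt zs) - int (length zs)\<bar>)"
    by (rule sumL_cong) (simp add: minc_real)
  also have "\<dots> = 2 ^ k * (real k / 2) - (1/2) * GG k 0"
    by (simp only: sumL_diff sumL_cmult sumL_const GG_def)
  also have "\<dots> = 2 ^ k * (real k / 2 - ee k / 2)" by (simp add: ee_def algebra_simps)
  finally show ?thesis .
qed

lemma sumL_bmin: "sumL (sum_list ks) (\<lambda>ys. real (bmin ks ys)) = 2 ^ sum_list ks * (\<Sum>k\<leftarrow>ks. real k / 2 - ee k / 2)"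
proof (induction ks)
  case Nil then show ?case by simp
next
  case (Cons k ks)
  let ?n = "sum_list ks"
  let ?S = "(\<Sum>k\<leftarrow>ks. real k / 2 - ee k / 2)"
  have "sumL (sum_list (k # ks)) (\<lambda>ys. real (bmin (k # ks) ys))
      = sumL k (\<lambda>zs. sumL ?n (\<lambda>ws. real (bmin (k # ks) (zs @ ws))))"
    by (simp add: sumL_split)
  also have "\<dots> = sumL k (\<lambda>zs. 2 ^ ?n * real (minc zs) + 2 ^ ?n * ?S)"
  proof (rule sumL_cong)
    fix zs :: "bool list" assume "length zs = k"
    then have "sumL ?n (\<lambda>ws. real (bmin (k # ks) (zs @ ws))) = sumL ?n (\<lambda>ws. real (minc zs) + real (bmin ks ws))"
      by (intro sumL_cong) simp
    also have "\<dots> = 2 ^ ?n * real (minc zs) + 2 ^ ?n * ?S"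
      using Cons.IH by (simp add: sumL_add sumL_const)
    finally show "sumL ?n (\<lambda>ws. real (bmin (k # ks) (zs @ ws))) = 2 ^ ?n * real (minc zs) + 2 ^ ?n * ?S" .
  qed
  also have "\<dots> = 2 ^ ?n * (2 ^ k * (real k / 2 - ee k / 2)) + 2 ^ k * (2 ^ ?n * ?S)"
    by (simp add: sumL_add sumL_cmult sumL_const sumL_minc)
  also have "\<dots> = 2 ^ sum_list (k # ks) * (\<Sum>k\<leftarrow>k # ks. real k / 2 - ee k / 2)"
    by (simp add: power_add algebra_simps)
  finally show ?case .
qed

lemma sum_list_half: "(\<Sum>k\<leftarrow>ks. real k / 2 - ee k / 2) = real (sum_list ks) / 2 - (\<Sum>k\<leftarrow>ks. ee k) / 2"
  by (induction ks) (simp_all add: algebra_simps add_divide_distrib diff_divide_distrib)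



lemma block_bound:
  fixes d T :: nat assumes d1: "1 \<le> d" and dT: "d \<le> T"
  shows "sqrt (real d * real T / 2) \<le> real (T mod d) * ee (Suc (T div d)) + real (d - T mod d) * ee (T div d)"
proof -
  define k where "k = T div d"
  define r where "r = T mod d"
  have Tkr: "T = d * k + r" by (simp add: k_def r_def)
  have rd: "r < d" using d1 by (simp add: r_def)
  have k1: "1 \<le> k" unfolding k_def using dT d1 by (metis div_le_mono div_self not_one_le_zero)
  define R where "R = real r"
  define D where "D = real d"
  define K where "K = real k"
  have RD: "0 \<le> R" "R \<le> D" using rd by (simp_all add: R_def D_def)
  have D1: "1 \<le> D" using d1 by (simp add: D_def)
  have dr: "real (d - r) = D - R" using rd by (simp add: D_def R_def of_nat_diff)
  have TT: "real T = D * K + R" using Tkr by (simp add: D_def K_def R_def)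
  define a where "a = ee k"
  define b where "b = ee (Suc k)"
  have a0: "0 \<le> a" and b0: "0 \<le> b" by (simp_all add: a_def b_def ee_nonneg)
  define Y where "Y = R * b + (D - R) * a"
  have Y0: "0 \<le> Y" using a0 b0 RD by (simp add: Y_def)
  have main: "D * (D * K + R) / 2 \<le> Y^2"
  proof -
    have "k = 2 * (k div 2) \<or> k = Suc (2 * (k div 2))" by presburger
    then obtain m where m: "k = 2 * m \<or> k = Suc (2 * m)" by blast
    show ?thesis
    proof (cases "k = Suc (2 * m)")
      case True
      define s where "s = sqrt (real (Suc m))"
      have s0: "0 \<le> s" by (simp add: s_def)
      have ss: "s^2 = real (Suc m)" by (simp add: s_def)
      have "(k + 1) div 2 = Suc m" "(Suc k + 1) div 2 = Suc m" using True by simp_all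
      then have as: "s \<le> a" "s \<le> b" using ee_lower[of k] ee_lower[of "Suc k"] by (simp_all add: s_def a_def b_def)
      have "R * s + (D - R) * s \<le> Y" unfolding Y_def using as RD by (intro add_mono mult_left_mono) auto
      then have DY: "D * s \<le> Y" by (simp add: algebra_simps)
      have "0 \<le> D * s" using D1 s0 by simp
      have "(D * s)^2 \<le> Y^2" using DY \<open>0 \<le> D * s\<close> by (rule power_mono)
      moreover have "(D * s)^2 = D * (D * (K + 1) / 2)" using ss True by (simp add: power_mult_distrib K_def power2_eq_square)
      moreover have "D * (D * K + R) / 2 \<le> D * (D * (K + 1) / 2)"
      proof -
        have "D * K + R \<le> D * (K + 1)" using RD by (simp add: algebra_simps)
        then show ?thesis using D1 by (simp add: mult_left_mono)
      qed
      ultimately show ?thesis by linarith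
    next
      case False
      then have k: "k = 2 * m" using m by simp
      then have m1: "1 \<le> m" using k1 by simp
      define s0 where "s0 = sqrt (real m)"
      define s1 where "s1 = sqrt (real (Suc m))"
      have s00: "0 \<le> s0" "0 \<le> s1" by (simp_all add: s0_def s1_def)
      have "(k + 1) div 2 = m" "(Suc k + 1) div 2 = Suc m" using k by simp_all
      then have as: "s0 \<le> a" "s1 \<le> b" using ee_lower[of k] ee_lower[of "Suc k"] by (simp_all add: s0_def s1_def a_def b_def)
      define Z where "Z = R * s1 + (D - R) * s0"
      have Z0: "0 \<le> Z" using s00 RD by (simp add: Z_def)
      have "Z \<le> Y" unfolding Y_def Z_def using as RD by (intro add_mono mult_left_mono) auto
      then have ZY: "Z^2 \<le> Y^2" using Z0 by (rule power_mono)
      have p: "s0 * s1 \<ge> real m + 1/4"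
      proof -
        have "s0 * s1 = sqrt (real m * real (Suc m))" by (simp add: s0_def s1_def real_sqrt_mult)
        moreover have "(real m + 1/4)^2 \<le> real m * real (Suc m)" using m1
          by (simp add: power2_eq_square algebra_simps)
        ultimately show ?thesis using real_le_rsqrt by simp
      qed
      have "Z^2 = R^2 * s1^2 + 2 * R * (D - R) * (s0 * s1) + (D - R)^2 * s0^2"
        by (simp add: Z_def power2_eq_square algebra_simps)
      also have "\<dots> = R^2 * (real m + 1) + 2 * R * (D - R) * (s0 * s1) + (D - R)^2 * real m"
        by (simp add: s0_def s1_def)
      also have "\<dots> \<ge> R^2 * (real m + 1) + 2 * R * (D - R) * (real m + 1/4) + (D - R)^2 * real m"
      proof -
        have nn: "0 \<le> 2 * R * (D - R)" using RD by simp
        have "2 * R * (D - R) * (real m + 1/4) \<le> 2 * R * (D - R) * (s0 * s1)"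
          using p nn by (rule mult_left_mono)
        then show ?thesis by simp
      qed
      finally have Zl: "R^2 * (real m + 1) + 2 * R * (D - R) * (real m + 1/4) + (D - R)^2 * real m \<le> Z^2" .
      have "R^2 * (real m + 1) + 2 * R * (D - R) * (real m + 1/4) + (D - R)^2 * real m
          = real m * D^2 + R^2 / 2 + R * D / 2"
        by (simp add: power2_eq_square algebra_simps)
      moreover have "D * (D * K + R) / 2 = real m * D^2 + R * D / 2"
        using k by (simp add: K_def power2_eq_square algebra_simps)
      moreover have "0 \<le> R^2 / 2" by simp
      ultimately show ?thesis using Zl ZY by linarith
    qed
  qed
  have "sqrt (real d * real T / 2) \<le> Y"
    using sqrt_le_of_sq[OF _ Y0, of "real d * real T / 2"] main TT by (simp add: D_def)
  then show ?thesis by (simp add: Y_def R_def D_def a_def b_def r_def k_def dr[unfolded r_def])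
qed

lemma ldim_facts:
  fixes H :: "('x \<Rightarrow> bool) set"
  assumes ne: "H \<noteq> {}" and l: "ldim H = enat d"
  shows "\<And>k. shatters_depth H k \<Longrightarrow> k \<le> d" and "shatters_depth H d"
proof -
  have setq: "{enat k | k. shatters_depth H k} = enat ` {k. shatters_depth H k}" by auto
  show bnd: "\<And>k. shatters_depth H k \<Longrightarrow> k \<le> d"
  proof -
    fix k assume "shatters_depth H k"
    then have "enat k \<in> {enat k | k. shatters_depth H k}" by auto
    then have "enat k \<le> ldim H" unfolding ldim_def by (rule Sup_upper)
    then show "k \<le> d" using l by simp
  qed
  let ?K = "{k. shatters_depth H k}"
  have fin: "finite ?K" by (rule finite_subset[of _ "{..d}"]) (auto dest: bnd)
  have kne: "?K \<noteq> {}" using ne shatters_zero by blast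
  have "ldim H = Max (enat ` ?K)" unfolding ldim_def setq
    using fin kne by (simp add: cSup_eq_Max)
  moreover have "Max (enat ` ?K) \<in> enat ` ?K" using fin kne by (intro Max_in) auto
  ultimately have "enat d \<in> enat ` ?K" using l by simp
  then show "shatters_depth H d" by auto
qed

lemma lower:
  fixes H :: "('x \<Rightarrow> bool) set"
  assumes ne: "H \<noteq> {}" and sh: "shatters_depth H d" and dT: "d \<le> T" and d1: "1 \<le> d"
  shows "sqrt (real d * real T / 8) \<le> minimax_regret T H"
proof (rule minimax_ge)
  fix A :: "'x learner" assume vA: "valid_learner A"
  obtain tr :: "bool list \<Rightarrow> 'x" where tr: "\<forall>\<sigma>. length \<sigma> = d \<longrightarrow> (\<exists>h\<in>H. \<forall>i<d. h (tr (take i \<sigma>)) = \<sigma> ! i)"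
    using sh unfolding shatters_depth_def by blast
  define k where "k = T div d"
  define r where "r = T mod d"
  define ks where "ks = replicate r (Suc k) @ replicate (d - r) k"
  have rd: "r < d" using d1 by (simp add: r_def)
  have lks: "length ks = d" using rd by (simp add: ks_def)
  have sks: "sum_list ks = T"
  proof -
    have "sum_list ks = r * Suc k + (d - r) * k" by (simp add: ks_def sum_list_replicate)
    also have "\<dots> = d * k + r" using rd by (simp add: algebra_simps diff_mult_distrib)
    also have "\<dots> = T" by (simp add: k_def r_def)
    finally show ?thesis .
  qed
  have see: "(\<Sum>k\<leftarrow>ks. ee k) = real r * ee (Suc k) + real (d - r) * ee k"
    by (simp add: ks_def sum_list_replicate)
  have LB: "sqrt (real d * real T / 2) \<le> (\<Sum>k\<leftarrow>ks. ee k)"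
    using block_bound[OF d1 dT] see by (simp add: k_def r_def)
  define S where "S = bseq tr ks"
  have ad: "adaptive T S" using adaptive_bseq[of ks tr] sks by (simp add: S_def)
  have E: "sumL T (\<lambda>ys. exp_mistakes A [] (S ys)) = 2 ^ T * real T / 2"
    by (rule em_sum[OF vA ad])
  have I: "sumL T (\<lambda>ys. real (INF g\<in>H. mistakes g (S ys))) \<le> sumL T (\<lambda>ys. real (bmin ks ys))"
  proof (rule sumL_mono)
    fix ys :: "bool list" assume "length ys = T"
    have "length (majs ks ys) = d" using lks by simp
    then obtain h where h: "h \<in> H" "\<forall>i<d. h (tr (take i (majs ks ys))) = majs ks ys ! i"
      using tr by blast
    have "mistakes h (S ys) = bmin ks ys" unfolding S_def by (rule bseq_mis) (use h lks in simp)
    then show "real (INF g\<in>H. mistakes g (S ys)) \<le> real (bmin ks ys)"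
      using INF_le[OF h(1), of "S ys"] by simp
  qed
  have B: "sumL T (\<lambda>ys. real (bmin ks ys)) = 2 ^ T * (real T / 2 - (\<Sum>k\<leftarrow>ks. ee k) / 2)"
    using sumL_bmin[of ks] sks by (simp add: sum_list_half)
  have "sumL T (\<lambda>ys. exp_mistakes A [] (S ys) - real (INF g\<in>H. mistakes g (S ys)))
      \<ge> 2 ^ T * ((\<Sum>k\<leftarrow>ks. ee k) / 2)"
    using E I B by (simp add: sumL_diff algebra_simps)
  moreover have "2 ^ T * sqrt (real d * real T / 8) \<le> 2 ^ T * ((\<Sum>k\<leftarrow>ks. ee k) / 2)"
  proof -
    have "sqrt (real d * real T / 8) = sqrt (real d * real T / 2) / 2"
    proof -
      have s4: "sqrt (4::real) = 2" by (rule real_sqrt_unique) simp_all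
      have "sqrt (real d * real T / 8) = sqrt ((real d * real T / 2) / 4)" by simp
      also have "\<dots> = sqrt (real d * real T / 2) / sqrt 4" by (rule real_sqrt_divide)
      also have "\<dots> = sqrt (real d * real T / 2) / 2" by (simp only: s4)
      finally show ?thesis .
    qed
    then show ?thesis using LB by simp
  qed
  ultimately have "2 ^ T * sqrt (real d * real T / 8)
      \<le> sumL T (\<lambda>ys. exp_mistakes A [] (S ys) - real (INF g\<in>H. mistakes g (S ys)))" by linarith
  then obtain ys where ys: "length ys = T"
    "sqrt (real d * real T / 8) \<le> exp_mistakes A [] (S ys) - real (INF g\<in>H. mistakes g (S ys))"
    using sumL_exists by blast
  have "length (S ys) = T" using adaptive_length[OF ad ys(1)] .
  then have "exp_mistakes A [] (S ys) - real (INF g\<in>H. mistakes g (S ys)) \<le> regret A T H"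
    by (rule regret_ge[OF vA])
  then show "sqrt (real d * real T / 8) \<le> regret A T H" using ys(2) by linarith
qed

theorem theorem2:
  fixes H :: "('x \<Rightarrow> bool) set" and T d :: nat
  assumes "H \<noteq> {}"
    and "ldim H = enat d"
    and "d \<le> T"
    and "2 \<le> T"
  shows "sqrt (real d * real T / 8) \<le> minimax_regret T H
       \<and> minimax_regret T H \<le> 3 * sqrt (real d * real T * ln (real T))"
proof
  have bnd: "\<And>k. shatters_depth H k \<Longrightarrow> k \<le> d" and sh: "shatters_depth H d"
    using ldim_facts[OF assms(1,2)] by auto
  show "sqrt (real d * real T / 8) \<le> minimax_regret T H"
  proof (cases "d = 0")
    case True
    have "0 \<le> minimax_regret T H"
      by (rule minimax_ge) (rule regret_nonneg[OF _ assms(1)])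
    then show ?thesis using True by simp
  next
    case False
    then show ?thesis using lower[OF assms(1) sh assms(3)] by simp
  qed
  show "minimax_regret T H \<le> 3 * sqrt (real d * real T * ln (real T))"
    by (rule upper[OF assms(1) bnd assms(3,4)])
qed


end
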